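(* Assume (A3), (A4), let $p\in(0,2)$ and $q\in(0,1]$ with $q+1<p$, and let $x$ be a trajectory solution of (MTRIGS) with initial data $(x_0,v_0)$. Then for every $r\in[q,\frac{q+1}2]$, $$\int_{t_0}^{+\infty}s^{2r-q}\|\dot x(s)\|^2\,ds<+\infty .$$
   Context: $\mathcal H$ real Hilbert space; $f_1,\dots,f_m:\mathcal H\to\mathbb R$ convex, continuously differentiable with Lipschitz continuous gradients; $F=(f_1,\dots,f_m)^\top$. Weak Pareto optimal: no $x$ with $f_i(x)<f_i(x^* )$ for all $i$; $\mathcal P_w$ the set of such points. $\mathcal L(F,b):=\{x:f_i(x)\le b_i\ \forall i\}$, $\mathcal{LP}_w(F,b):=\mathcal L(F,b)\cap\mathcal P_w$. Parameters $t_0>0$, $\alpha,\beta>0$, $q\in(0,1]$, $p\in(0,2]$, initial data $x_0,v_0\in\mathcal H$; $C(x):=\operatorname{conv}\{\nabla f_i(x)\}$. A trajectory solution of (MTRIGS) is $x:[t_0,\infty)\to\mathcal H$, continuously differentiable, with $\dot x$ absolutely continuous on each $[t_0,T]$ and a.e. derivative $\ddot x$ (Bochner measurable, $\dot x(t)=\dot x(t_0)+\int_{t_0}^t\ddot x$), satisfying $\frac{\alpha}{t^q}\dot x(t)+\operatorname{proj}_{C(x(t))+\frac{\beta}{t^p}x(t)+\ddot x(t)}(0)=0$ for a.e. $t\ge t_0$, $x(t_0)=x_0$, $\dot x(t_0)=v_0$. (A3): with $a_i:=\frac{\beta}{2t_0^p}\|x_0\|^2+\frac12\|v_0\|^2$,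 for every $x\in\mathcal L(F,F(x_0)+a)$, $\mathcal{LP}_w(F,F(x))\ne\emptyset$, and $R:=\sup_{F^*\in F(\mathcal{LP}_w(F,F(x_0)+a))}\inf_{z\in F^{-1}(\{F^*\})}\|z\|<\infty$. (A4): $S(w):=\operatorname{argmin}_z\max_i(f_i(z)-w_i)\neq\emptyset$ for all $w\in\mathbb R^m$ and $w\mapsto\operatorname{proj}_{S(w)}(0)$ is continuous. *)

theory Defs
  imports "HOL-Analysis.Analysis"
begin

definition hproj :: "'a::real_inner set \<Rightarrow> 'a \<Rightarrow> 'a" where
  "hproj S y = (SOME z. z \<in> S \<and> (\<forall>w\<in>S. dist y z \<le> dist y w))"

definition Fvec :: "('m::finite \<Rightarrow> 'a \<Rightarrow> real) \<Rightarrow> 'a \<Rightarrow> real^'m" where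
  "Fvec f x = (\<chi> i. f i x)"

definition levelset :: "('m::finite \<Rightarrow> 'a \<Rightarrow> real) \<Rightarrow> real^'m \<Rightarrow> 'a set" where
  "levelset f b = {x. \<forall>i. f i x \<le> b $ i}"

definition weak_pareto :: "('m::finite \<Rightarrow> 'a \<Rightarrow> real) \<Rightarrow> 'a set" where
  "weak_pareto f = {xs. \<not> (\<exists>x. \<forall>i. f i x < f i xs)}"

definition LPw :: "('m::finite \<Rightarrow> 'a \<Rightarrow> real) \<Rightarrow> real^'m \<Rightarrow> 'a set" where
  "LPw f b = levelset f b \<inter> weak_pareto f"

definition Sset :: "('m::finite \<Rightarrow> 'a \<Rightarrow> real) \<Rightarrow> real^'m \<Rightarrow> 'a set" where
  "Sset f w = {z. \<forall>y. (MAX i. f i z - w $ i) \<le> (MAX i. f i y - w $ i)}"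

definition Cset :: "('m::finite \<Rightarrow> 'a \<Rightarrow> 'a) \<Rightarrow> 'a::real_vector \<Rightarrow> 'a set" where
  "Cset df x = convex hull (range (\<lambda>i. df i x))"

end

theory Submission
  imports Defs
begin

lemma l2g:
  fixes H G :: "real \<Rightarrow> real"
  assumes ab: "a \<le> b" and G: "\<And>s t. a \<le> s \<Longrightarrow> s \<le> t \<Longrightarrow> t \<le> b \<Longrightarrow> G s \<le> G t"
    and loc: "\<And>e. e > 0 \<Longrightarrow> \<exists>d>0. \<forall>s t. a \<le> s \<longrightarrow> s \<le> t \<longrightarrow> t \<le> b \<longrightarrow> t - s < d
                 \<longrightarrow> H t - H s \<le> e * (G t - G s)"
  shows "H b \<le> H a"
proof -
  have key: "H b - H a \<le> e * (G b - G a)" if e: "e > 0" for e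
  proof -
    obtain d where d: "d>0" and dl: "\<forall>s t. a \<le> s \<longrightarrow> s \<le> t \<longrightarrow> t \<le> b \<longrightarrow> t - s < d
                 \<longrightarrow> H t - H s \<le> e * (G t - G s)" using loc[OF e] by blast
    obtain n::nat where n: "(b - a)/d < n" using reals_Archimedean2 by blast
    have npos: "real n > 0" using n ab d by (smt (verit) divide_nonneg_pos)
    define P where "P k = a + real k * (b - a) / real n" for k
    have stepd: "(b-a)/n < d" using n npos d by (simp add: divide_less_eq mult.commute)
    have Pmono: "a \<le> P k" for k using ab npos by (simp add: P_def)
    have Pstep: "P (Suc k) = P k + (b-a)/n" for k by (simp add: P_def add_divide_distrib distrib_right)
    have Pb: "k \<le> n \<Longrightarrow> P k \<le> b" for k
    proof -
      assume "k \<le> n"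
      hence "real k * (b - a) \<le> real n * (b - a)" using ab by (intro mult_right_mono) auto
      hence "real k * (b - a) / n \<le> b - a" using npos by (simp add: pos_divide_le_eq mult.commute)
      thus "P k \<le> b" by (simp add: P_def)
    qed
    have "k \<le> n \<Longrightarrow> H (P k) - H a \<le> e * (G (P k) - G a)" for k
    proof (induction k)
      case 0 then show ?case by (simp add: P_def)
    next
      case (Suc k)
      have "H (P (Suc k)) - H (P k) \<le> e * (G (P (Suc k)) - G (P k))"
        using dl Pmono[of k] Pb[of "Suc k"] Suc.prems Pstep[of k] stepd ab npos
        by (auto simp: divide_nonneg_pos)
      with Suc show ?case by (simp add: algebra_simps)
    qed
    moreover have "P n = b" using npos by (simp add: P_def)
    ultimately show ?thesis by fastforce
  qed
  show ?thesis
  proof (rule ccontr)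
    assume "\<not> H b \<le> H a"
    hence pos: "H b - H a > 0" by simp
    have Gd: "G b - G a \<ge> 0" using G[of a b] ab by simp
    show False
    proof (cases "G b - G a = 0")
      case True then show ?thesis using key[of 1] pos by simp
    next
      case False
      hence Gp: "G b - G a > 0" using Gd by simp
      have "H b - H a \<le> ((H b - H a)/(2*(G b - G a))) * (G b - G a)"
        using key[of "(H b - H a)/(2*(G b - G a))"] pos Gp by simp
      also have "\<dots> = (H b - H a)/2" using Gp by (simp add: field_simps)
      finally show ?thesis using pos by simp
    qed
  qed
qed

lemma ftc_sub:
  fixes f :: "real \<Rightarrow> 'a::banach"
  assumes "a \<le> s" "s \<le> t" "t \<le> b"
    and "\<And>x. x \<in> {a..b} \<Longrightarrow> (f has_vector_derivative f' x) (at x within {a..b})"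
  shows "(f' has_integral (f t - f s)) {s..t}"
proof (rule fundamental_theorem_of_calculus)
  show "s \<le> t" by fact
  fix x assume "x \<in> {s..t}"
  hence x: "x \<in> {a..b}" using assms(1-3) by auto
  show "(f has_vector_derivative f' x) (at x within {s..t})"
    by (rule has_vector_derivative_within_subset[OF assms(4)[OF x]]) (use assms(1-3) in auto)
qed

lemma integral_diff_sub:
  fixes f :: "real \<Rightarrow> 'a::banach"
  assumes "f integrable_on {a..b}" "a \<le> s" "s \<le> t" "t \<le> b"
  shows "integral {a..t} f - integral {a..s} f = integral {s..t} f"
proof -
  have "f integrable_on {a..t}" using assms by (intro integrable_subinterval_real[OF assms(1)]) auto
  from Henstock_Kurzweil_Integration.integral_combine[OF assms(2,3) this] show ?thesis by (simp add: algebra_simps)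
qed

lemma kappaD:
  fixes k k' D :: "real \<Rightarrow> real"
  assumes ab: "a \<le> b"
    and kder: "\<And>t. t \<in> {a..b} \<Longrightarrow> (k has_vector_derivative k' t) (at t within {a..b})"
    and k'c: "continuous_on {a..b} k'"
    and kpos: "\<And>t. t\<in>{a..b} \<Longrightarrow> k t \<ge> 0"
    and Dc: "continuous_on {a..b} D"
    and Dmono: "\<And>s t. a \<le> s \<Longrightarrow> s \<le> t \<Longrightarrow> t \<le> b \<Longrightarrow> D t \<le> D s"
  shows "k b * D b - k a * D a \<le> integral {a..b} (\<lambda>t. k' t * D t)"
proof -
  define H where "H t = k t * D t - integral {a..t} (\<lambda>\<tau>. k' \<tau> * D \<tau>)" for t
  have intg: "(\<lambda>t. k' t * D t) integrable_on {a..b}"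
    by (intro integrable_continuous_interval continuous_intros k'c Dc)
  obtain B where B: "\<And>t. t \<in> {a..b} \<Longrightarrow> \<bar>k' t\<bar> \<le> B"
    using compact_imp_bounded[OF compact_continuous_image[OF k'c compact_Icc]]
    unfolding bounded_iff by fastforce
  have Bnn: "B \<ge> 0" using B[of a] ab by auto
  have ucD: "uniformly_continuous_on {a..b} D" by (intro compact_uniformly_continuous Dc) auto
  have "H b \<le> H a"
  proof (rule l2g[OF ab, of "\<lambda>t. t"])
    fix e :: real assume e: "e > 0"
    obtain d where d: "d > 0" and dd: "\<And>x y. x \<in> {a..b} \<Longrightarrow> y \<in> {a..b} \<Longrightarrow> dist y x < d
        \<Longrightarrow> dist (D y) (D x) < e / (B + 1)"
      using ucD[unfolded uniformly_continuous_on_def, rule_format, of "e/(B+1)"] e Bnn by auto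
    show "\<exists>d>0. \<forall>s t. a \<le> s \<longrightarrow> s \<le> t \<longrightarrow> t \<le> b \<longrightarrow> t - s < d \<longrightarrow> H t - H s \<le> e * (t - s)"
    proof (intro exI[of _ d] conjI allI impI d)
      fix s t assume st: "a \<le> s" "s \<le> t" "t \<le> b" "t - s < d"
      have ks: "(k' has_integral (k t - k s)) {s..t}" by (rule ftc_sub[OF st(1-3) kder])
      have i1: "integral {a..t} (\<lambda>\<tau>. k' \<tau> * D \<tau>) - integral {a..s} (\<lambda>\<tau>. k' \<tau> * D \<tau>)
            = integral {s..t} (\<lambda>\<tau>. k' \<tau> * D \<tau>)"
        by (rule integral_diff_sub[OF intg st(1-3)])
      have intst: "(\<lambda>\<tau>. k' \<tau> * D \<tau>) integrable_on {s..t}"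
        using intg st by (intro integrable_subinterval_real[OF intg]) auto
      have k'st: "k' integrable_on {s..t}" using ks by blast
      have "(k t - k s) * D s = integral {s..t} (\<lambda>\<tau>. k' \<tau> * D s)"
        using ks by (simp add: integral_mult_left has_integral_integral integral_unique)
      hence eq1: "(k t - k s) * D s - integral {s..t} (\<lambda>\<tau>. k' \<tau> * D \<tau>)
          = integral {s..t} (\<lambda>\<tau>. k' \<tau> * (D s - D \<tau>))"
      proof -
        have "integral {s..t} (\<lambda>\<tau>. k' \<tau> * (D s - D \<tau>))
           = integral {s..t} (\<lambda>\<tau>. k' \<tau> * D s - k' \<tau> * D \<tau>)" by (simp add: algebra_simps)
        also have "\<dots> = integral {s..t} (\<lambda>\<tau>. k' \<tau> * D s) - integral {s..t} (\<lambda>\<tau>. k' \<tau> * D \<tau>)"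
          using intst k'st by (intro integral_diff integrable_on_mult_left) auto
        finally show ?thesis using \<open>(k t - k s) * D s = _\<close> by simp
      qed
      have "integral {s..t} (\<lambda>\<tau>. k' \<tau> * (D s - D \<tau>)) \<le> integral {s..t} (\<lambda>\<tau>. e)"
      proof (rule integral_le)
        show "(\<lambda>\<tau>. k' \<tau> * (D s - D \<tau>)) integrable_on {s..t}"
        proof -
          have "(\<lambda>\<tau>. k' \<tau> * D s - k' \<tau> * D \<tau>) integrable_on {s..t}"
            using intst k'st by (intro integrable_diff integrable_on_mult_left) auto
          thus ?thesis by (simp add: algebra_simps)
        qed
        show "(\<lambda>\<tau>. e) integrable_on {s..t}" by (rule integrable_const_ivl)
        fix \<tau> assume \<tau>: "\<tau> \<in> {s..t}"
        have "dist (D \<tau>) (D s) < e/(B+1)" using dd[of s \<tau>] st \<tau> by (auto simp: dist_real_def)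
        hence db: "\<bar>D s - D \<tau>\<bar> \<le> e/(B+1)" by (simp add: dist_real_def)
        have kb: "\<bar>k' \<tau>\<bar> \<le> B" using B \<tau> st by auto
        have "\<bar>k' \<tau> * (D s - D \<tau>)\<bar> \<le> B * (e/(B+1))"
          unfolding abs_mult by (rule mult_mono[OF kb db Bnn abs_ge_zero])
        also have "\<dots> \<le> e" using e Bnn by (simp add: field_simps)
        finally show "k' \<tau> * (D s - D \<tau>) \<le> e" by simp
      qed
      also have "\<dots> = e * (t - s)" using st by simp
      finally have eb: "integral {s..t} (\<lambda>\<tau>. k' \<tau> * (D s - D \<tau>)) \<le> e * (t - s)" .
      have "k t * (D t - D s) \<le> 0" using kpos[of t] Dmono[of s t] st by (simp add: mult_nonneg_nonpos)
      have "H t - H s = k t * (D t - D s) + ((k t - k s) * D s - integral {s..t} (\<lambda>\<tau>. k' \<tau> * D \<tau>))"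
        unfolding H_def using i1 by (simp add: algebra_simps)
      then show "H t - H s \<le> e * (t - s)" using eq1 eb \<open>k t * (D t - D s) \<le> 0\<close> by linarith
    qed
  qed auto
  then show ?thesis by (simp add: H_def)
qed

lemma hproj_prop:
  fixes S :: "'a::real_inner set"
  assumes "compact S" "S \<noteq> {}"
  shows "hproj S 0 \<in> S \<and> (\<forall>y\<in>S. norm (hproj S 0) \<le> norm y)"
proof -
  have "\<exists>z\<in>S. \<forall>w\<in>S. dist 0 z \<le> dist 0 w"
    by (rule continuous_attains_inf[OF assms]) (intro continuous_intros)
  hence "\<exists>z. z \<in> S \<and> (\<forall>w\<in>S. dist 0 z \<le> dist 0 w)" by blast
  from someI_ex[OF this] show ?thesis unfolding hproj_def by simp
qed

lemma minnorm_vi: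
  fixes S :: "'a::real_inner set"
  assumes cS: "convex S" and xi: "\<xi> \<in> S" and mn: "\<forall>y\<in>S. norm \<xi> \<le> norm y" and y: "y \<in> S"
  shows "\<xi> \<bullet> (y - \<xi>) \<ge> 0"
proof (rule ccontr)
  define c where "c = \<xi> \<bullet> (y - \<xi>)"
  define d where "d = (y - \<xi>) \<bullet> (y - \<xi>)"
  assume "\<not> 0 \<le> \<xi> \<bullet> (y - \<xi>)"
  hence c: "c < 0" by (simp add: c_def)
  have d: "d \<ge> 0" by (simp add: d_def)
  define s where "s = min 1 (- c / (d + 1))"
  have "-c/(d+1) > 0" using c d by (intro divide_pos_pos) auto
  hence s0: "s > 0" by (simp add: s_def)
  have s1: "s \<le> 1" by (simp add: s_def)
  have "\<xi> + s *\<^sub>R (y - \<xi>) = (1 - s) *\<^sub>R \<xi> + s *\<^sub>R y" by (simp add: algebra_simps)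
  hence mem: "\<xi> + s *\<^sub>R (y - \<xi>) \<in> S" using cS xi y s0 s1 by (simp add: convex_def)
  have "(norm \<xi>)\<^sup>2 \<le> (norm (\<xi> + s *\<^sub>R (y - \<xi>)))\<^sup>2" using mn mem by simp
  also have "\<dots> = (norm \<xi>)\<^sup>2 + 2 * s * c + s\<^sup>2 * d"
  proof -
    have gen: "(norm (a + s *\<^sub>R w))\<^sup>2 = (norm a)\<^sup>2 + 2 * s * (a \<bullet> w) + s\<^sup>2 * (w \<bullet> w)" for a w :: 'a
      unfolding power2_norm_eq_inner by (simp add: inner_add_left inner_add_right inner_commute power2_eq_square algebra_simps)
    show ?thesis unfolding c_def d_def by (rule gen)
  qed
  finally have "0 \<le> s * (2 * c + s * d)" by (simp add: power2_eq_square algebra_simps)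
  hence "0 \<le> 2 * c + s * d" using s0 by (simp add: zero_le_mult_iff)
  moreover have "s * d \<le> (- c / (d + 1)) * d" using d by (intro mult_right_mono) (auto simp: s_def)
  moreover have "(- c / (d + 1)) * d \<le> - c" using c d by (simp add: field_simps)
  ultimately show False using c by linarith
qed

lemma hull_inner_le:
  fixes G :: "'m::finite \<Rightarrow> 'a::real_inner"
  assumes "g \<in> convex hull (range G)"
  shows "u \<bullet> g \<le> (MAX i. u \<bullet> G i)"
proof -
  have "convex hull (range G) \<subseteq> {y. inner u y \<le> (MAX i. u \<bullet> G i)}"
    by (rule hull_minimal) (auto simp: convex_halfspace_le)
  thus ?thesis using assms by auto
qed

lemma hull_inner_ge:
  fixes G :: "'m::finite \<Rightarrow> 'a::real_inner"
  assumes "g \<in> convex hull (range G)"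
  shows "u \<bullet> g \<ge> (MIN i. u \<bullet> G i)"
proof -
  have "convex hull (range G) \<subseteq> {y. inner u y \<ge> (MIN i. u \<bullet> G i)}"
    by (rule hull_minimal) (auto simp: convex_halfspace_ge)
  thus ?thesis using assms by auto
qed

lemma conv_grad:
  fixes f :: "'a::real_inner \<Rightarrow> real"
  assumes cf: "convex_on UNIV f" and fd: "(f has_derivative (\<lambda>h. d \<bullet> h)) (at x)"
  shows "f y \<ge> f x + d \<bullet> (y - x)"
proof -
  define v where "v = y - x"
  define g where "g s = f (x + s *\<^sub>R v)" for s :: real
  have "((\<lambda>s. x + s *\<^sub>R v) has_derivative (\<lambda>h. h *\<^sub>R v)) (at (0::real))"
    by (auto intro!: derivative_eq_intros)
  moreover have "(f has_derivative (\<lambda>h. d \<bullet> h)) (at ((\<lambda>s. x + s *\<^sub>R v) 0))" using fd by simp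
  ultimately have "((\<lambda>s. f (x + s *\<^sub>R v)) has_derivative (\<lambda>h. d \<bullet> (h *\<^sub>R v))) (at 0)"
    by (rule has_derivative_compose)
  moreover have "(\<lambda>h. d \<bullet> (h *\<^sub>R v)) = (*) (d \<bullet> v)" by (auto simp: mult.commute)
  moreover have geq: "g = (\<lambda>s. f (x + s *\<^sub>R v))" by (rule ext) (simp add: g_def)
  ultimately have "(g has_field_derivative (d \<bullet> v)) (at 0)"
    by (simp add: has_field_derivative_def)
  hence lim: "((\<lambda>s. (g s - g 0) / (s - 0)) \<longlongrightarrow> d \<bullet> v) (at 0)"
    by (simp add: has_field_derivative_iff)
  hence lim': "((\<lambda>s. (g s - g 0) / (s - 0)) \<longlongrightarrow> d \<bullet> v) (at_right 0)"
    by (rule tendsto_mono[rotated]) (simp add: at_le)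
  have ev: "\<forall>\<^sub>F s in at_right 0. (g s - g 0) / (s - 0) \<le> f y - f x"
    unfolding eventually_at_right[OF zero_less_one]
  proof (intro exI[of _ 1] conjI allI impI)
    fix s :: real assume s: "0 < s" "s < 1"
    have "x + s *\<^sub>R v = (1 - s) *\<^sub>R x + s *\<^sub>R y" by (simp add: v_def algebra_simps)
    hence "g s \<le> (1 - s) * f x + s * f y"
      using convex_onD[OF cf, of s x y] s by (simp add: g_def)
    hence "g s - g 0 \<le> s * (f y - f x)" by (simp add: g_def algebra_simps)
    thus "(g s - g 0) / (s - 0) \<le> f y - f x" using s by (simp add: divide_le_eq mult.commute)
  qed simp
  have "d \<bullet> v \<le> f y - f x"
    by (rule tendsto_le[OF trivial_limit_at_right_real tendsto_const lim' ev])
  thus ?thesis by (simp add: v_def)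
qed

lemma integral_le_ae:
  fixes f g :: "real \<Rightarrow> real"
  assumes "f integrable_on S" "g integrable_on S" "negligible N" "\<And>x. x \<in> S - N \<Longrightarrow> f x \<le> g x"
  shows "integral S f \<le> integral S g"
proof -
  define g' where "g' x = (if x \<in> N then max (f x) (g x) else g x)" for x
  have e: "integral S g' = integral S g"
    by (rule integral_spike[OF assms(3)]) (simp add: g'_def)
  have i: "g' integrable_on S"
    by (rule integrable_spike[OF assms(2) assms(3)]) (simp add: g'_def)
  have "integral S f \<le> integral S g'"
    by (rule integral_le[OF assms(1) i]) (use assms(4) in \<open>auto simp: g'_def\<close>)
  thus ?thesis using e by simp
qed

lemma mono_by_ftc:
  fixes F F' :: "real \<Rightarrow> real"
  assumes "a \<le> s" "s \<le> t" "t \<le> b"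
    and "\<And>x. x \<in> {a..b} \<Longrightarrow> (F has_vector_derivative F' x) (at x within {a..b})"
    and "\<And>x. x \<in> {a..b} \<Longrightarrow> F' x \<ge> 0"
  shows "F s \<le> F t"
proof -
  have "(F' has_integral (F t - F s)) {s..t}" by (rule ftc_sub[OF assms(1-4)])
  moreover have "\<And>x. x \<in> {s..t} \<Longrightarrow> F' x \<ge> 0" using assms by auto
  ultimately have "F t - F s \<ge> 0" by (rule has_integral_nonneg)
  thus ?thesis by simp
qed

lemma continuous_on_Max_fin:
  fixes F :: "'i \<Rightarrow> 'b::topological_space \<Rightarrow> real"
  assumes "finite I" "I \<noteq> {}" "\<And>i. i \<in> I \<Longrightarrow> continuous_on S (F i)"
  shows "continuous_on S (\<lambda>t. Max ((\<lambda>i. F i t) ` I))"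
  using assms
proof (induction I rule: finite_ne_induct)
  case (singleton x) then show ?case by simp
next
  case (insert x I)
  have "continuous_on S (\<lambda>t. max (F x t) (Max ((\<lambda>i. F i t) ` I)))"
    using insert by (intro continuous_on_max) auto
  thus ?case using insert by simp
qed

lemma continuous_on_Min_fin:
  fixes F :: "'i \<Rightarrow> 'b::topological_space \<Rightarrow> real"
  assumes "finite I" "I \<noteq> {}" "\<And>i. i \<in> I \<Longrightarrow> continuous_on S (F i)"
  shows "continuous_on S (\<lambda>t. Min ((\<lambda>i. F i t) ` I))"
  using assms
proof (induction I rule: finite_ne_induct)
  case (singleton x) then show ?case by simp
next
  case (insert x I)
  have "continuous_on S (\<lambda>t. min (F x t) (Min ((\<lambda>i. F i t) ` I)))"
    using insert by (intro continuous_on_min) auto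
  thus ?case using insert by simp
qed

lemma continuous_on_MAX:
  fixes F :: "'i::finite \<Rightarrow> 'b::topological_space \<Rightarrow> real"
  assumes "\<And>i. continuous_on S (F i)"
  shows "continuous_on S (\<lambda>t. MAX i. F i t)"
  using continuous_on_Max_fin[where I=UNIV and F=F and S=S] assms by simp

lemma continuous_on_MIN:
  fixes F :: "'i::finite \<Rightarrow> 'b::topological_space \<Rightarrow> real"
  assumes "\<And>i. continuous_on S (F i)"
  shows "continuous_on S (\<lambda>t. MIN i. F i t)"
  using continuous_on_Min_fin[where I=UNIV and F=F and S=S] assms by simp

lemma integrable_to_inf_bounded:
  fixes h :: "real \<Rightarrow> real"
  assumes int: "\<And>y. y \<ge> a \<Longrightarrow> h integrable_on {a..y}"
    and nonneg: "\<And>y. y \<ge> a \<Longrightarrow> h y \<ge> 0"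
    and bnd: "\<And>y. y \<ge> a \<Longrightarrow> integral {a..y} h \<le> B"
  shows "h integrable_on {a..}"
proof -
  define f where "f \<equiv> \<lambda>n x. if x \<in> {a..of_nat n} then h x else 0"
  have has_integral_f: "(f n has_integral (integral {a..of_nat n} h)) {a..}" for n
  proof (cases "real n \<ge> a")
    case True
    then show ?thesis unfolding f_def
      by (metis (no_types, lifting) ext Icc_subset_Ici_iff order.refl
        has_integral_restrict int integrable_integral)
  next
    case False
    hence "{a..real n} = {}" by auto
    moreover have "f n = (\<lambda>x. 0)" using False by (auto simp: f_def)
    ultimately show ?thesis by simp
  qed
  have "h integrable_on {a..} \<and> (\<lambda>n. integral {a..} (f n)) \<longlonglongrightarrow> integral {a..} h"
  proof (intro monotone_convergence_increasing allI ballI)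
    fix n
    show "f n integrable_on {a..}"
      using has_integral_f by blast
  next
    fix n x
    assume "x \<in> {a..}"
    then show "f n x \<le> f (Suc n) x" using nonneg by (auto simp: f_def)
  next
    fix x :: real assume x: "x \<in> {a..}"
    have "eventually (\<lambda>n. real n \<ge> x) at_top"
      by (meson eventually_sequentiallyI nat_ceiling_le_eq)
    with x have "eventually (\<lambda>n. f n x = h x) at_top"
      by (simp add: eventually_mono f_def)
    thus "(\<lambda>n. f n x) \<longlonglongrightarrow> h x" by (simp add: tendsto_eventually)
  next
    have "norm (integral {a..} (f n)) \<le> max B 0" for n
    proof (cases "real n \<ge> a")
      case True
      have "integral {a..real n} h \<ge> 0"
        using True int nonneg by (intro Henstock_Kurzweil_Integration.integral_nonneg) auto
      then show ?thesis using has_integral_f[of n] bnd[OF True] by (simp add: integral_unique)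
    next
      case False
      hence "{a..real n} = {}" by auto
      then show ?thesis using has_integral_f[of n] by (simp add: integral_unique)
    qed
    thus "bounded (range(\<lambda>k. integral {a..} (f k)))"
      by (metis (no_types, lifting) boundedI rangeE)
  qed
  thus ?thesis by blast
qed

lemma ln_le_powr: "(x::real) > 0 \<Longrightarrow> d > 0 \<Longrightarrow> ln x \<le> x powr d / d"
proof -
  assume x: "x > 0" and d: "d > 0"
  have "ln (x powr d) \<le> x powr d" using x by (intro less_imp_le ln_less_self) simp
  moreover have "ln (x powr d) = d * ln x" using x by (simp add: ln_powr)
  ultimately show ?thesis using d by (simp add: field_simps)
qed

lemma big_T:
  fixes q k C :: real
  assumes q: "0 < q" "q < 1" and k: "k > 0"
  shows "\<exists>T\<ge>T3. T > 0 \<and> k * T powr (2-2*q) / (2-2*q) - (1+q) * ln T > C"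
proof -
  define Y0 where "Y0 = max 1 ((2-2*q)/k * ((1+q)/(1-q) + \<bar>C\<bar> + 1))"
  define T where "T = max (max T3 1) (Y0 powr (1/(1-q)))"
  have T1: "T \<ge> 1" by (simp add: T_def)
  have Y01: "Y0 \<ge> 1" by (simp add: Y0_def)
  have "T powr (1-q) \<ge> (Y0 powr (1/(1-q))) powr (1-q)"
    using q Y01 by (intro powr_mono2) (auto simp: T_def)
  also have "(Y0 powr (1/(1-q))) powr (1-q) = Y0" using q Y01 by (simp add: powr_powr)
  finally have yY: "T powr (1-q) \<ge> Y0" .
  define y where "y = T powr (1-q)"
  have y1: "y \<ge> 1" using yY Y01 by (simp add: y_def)
  have y2: "T powr (2-2*q) = y * y" unfolding y_def using T1
    by (simp add: powr_add[symmetric])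
  have lnT: "ln T \<le> y / (1-q)" unfolding y_def using T1 q by (intro ln_le_powr) auto
  have "k * y / (2-2*q) \<ge> (1+q)/(1-q) + \<bar>C\<bar> + 1"
  proof -
    have "y \<ge> (2-2*q)/k * ((1+q)/(1-q) + \<bar>C\<bar> + 1)" using yY by (simp add: y_def Y0_def)
    hence "k * y \<ge> (2-2*q) * ((1+q)/(1-q) + \<bar>C\<bar> + 1)" using k by (simp add: field_simps)
    thus ?thesis using q by (simp add: field_simps)
  qed
  hence i1: "y * (k * y / (2-2*q)) \<ge> y * ((1+q)/(1-q) + \<bar>C\<bar> + 1)" using y1 by (intro mult_left_mono) auto
  have i2: "(1+q) * ln T \<le> (1+q) * (y / (1-q))" using lnT q by (intro mult_left_mono) auto
  have e1: "k * T powr (2-2*q) / (2-2*q) = y * (k*y/(2-2*q))" by (simp add: y2)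
  have e2: "(1+q)*(y/(1-q)) = y*((1+q)/(1-q))" by simp
  have e3: "y * ((1+q)/(1-q) + \<bar>C\<bar> + 1) = y*((1+q)/(1-q)) + y * (\<bar>C\<bar> + 1)"
    by (simp add: distrib_left)
  have "k * T powr (2-2*q) / (2-2*q) - (1+q) * ln T \<ge> y * (\<bar>C\<bar> + 1)"
    using i1 i2 e1 e2 e3 by argo
  also have "y * (\<bar>C\<bar> + 1) \<ge> \<bar>C\<bar> + 1" using y1 by (simp add: mult_le_cancel_right1)
  finally have fin: "k * T powr (2-2*q) / (2-2*q) - (1+q) * ln T > C" by linarith
  have "T \<ge> T3" by (simp add: T_def)
  thus ?thesis using T1 fin by (intro exI[of _ T]) auto
qed

lemma gronwall_bound:
  fixes \<phi> :: "real \<Rightarrow> real" and T1 \<alpha> K A0 Bc q :: real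
  assumes T1: "T1 > 0" and q: "0 < q" "q < 1" and \<alpha>: "\<alpha> > 0" and K: "K > 0"
    and \<phi>c: "continuous_on {T1..} \<phi>" and \<phi>nn: "\<And>t. t \<ge> T1 \<Longrightarrow> \<phi> t \<ge> 0"
    and ineq: "\<And>T. T \<ge> T1 \<Longrightarrow> \<alpha>/2 * integral {T1..T} \<phi> \<le> A0 + K * T powr (2*q-1) * \<phi> T"
    and poly: "\<And>T. T \<ge> T1 \<Longrightarrow> integral {T1..T} \<phi> \<le> Bc * T powr (1+q)"
  shows "\<exists>B. \<forall>T\<ge>T1. integral {T1..T} \<phi> \<le> B"
proof (rule ccontr)
  define I where "I T = integral {T1..T} \<phi>" for T
  assume "\<not> ?thesis"
  hence unb: "\<forall>B. \<exists>T\<ge>T1. I T > B" by (auto simp: I_def not_le)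
  define B0 where "B0 = max (4*\<bar>A0\<bar>/\<alpha>) 1"
  obtain T3 where T3: "T3 \<ge> T1" "I T3 > B0" using unb by blast
  have cab: "continuous_on {a..b} \<phi>" if "T1 \<le> a" for a b
    using that by (intro continuous_on_subset[OF \<phi>c]) auto
  have intg: "\<phi> integrable_on {a..b}" if "T1 \<le> a" for a b
    using cab[OF that] by (rule integrable_continuous_interval)
  have Imono: "I s \<le> I t" if "T1 \<le> s" "s \<le> t" for s t
  proof -
    have "I t - I s = integral {s..t} \<phi>" unfolding I_def
      by (rule integral_diff_sub[OF intg]) (use that in auto)
    moreover have "integral {s..t} \<phi> \<ge> 0"
      using that intg \<phi>nn by (intro Henstock_Kurzweil_Integration.integral_nonneg) auto
    ultimately show ?thesis by simp
  qed
  have B0p: "B0 \<ge> 1" by (simp add: B0_def)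
  have Ibig: "I T > B0" if "T \<ge> T3" for T using Imono[of T3 T] T3 that by auto
  define k where "k = \<alpha>/(4*K)"
  have kpos: "k > 0" using \<alpha> K by (simp add: k_def)
  have key: "\<phi> T \<ge> k * T powr (1-2*q) * I T" if T: "T \<ge> T3" for T
  proof -
    have Tp: "T > 0" using T T3 T1 by simp
    have "\<alpha>/4 * I T \<ge> \<alpha>/4 * B0" using Ibig[OF T] \<alpha> by simp
    moreover have "\<alpha>/4 * B0 \<ge> \<bar>A0\<bar>"
    proof -
      have "B0 \<ge> 4*\<bar>A0\<bar>/\<alpha>" by (simp add: B0_def)
      hence "\<alpha>/4 * B0 \<ge> \<alpha>/4 * (4*\<bar>A0\<bar>/\<alpha>)" using \<alpha> by (intro mult_left_mono) auto
      thus ?thesis using \<alpha> by simp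
    qed
    ultimately have "\<alpha>/4 * I T \<le> \<alpha>/2 * I T - A0" by linarith
    also have "\<dots> \<le> K * T powr (2*q-1) * \<phi> T" using ineq[of T] T T3 by (simp add: I_def)
    finally have h1: "\<alpha>/4 * I T \<le> K * T powr (2*q-1) * \<phi> T" .
    have "T powr (1-2*q) * T powr (2*q-1) = 1" using Tp by (simp add: powr_add[symmetric])
    hence "k * T powr (1-2*q) * I T = (\<alpha>/4 * I T) * T powr (1-2*q) / K"
      by (simp add: k_def field_simps)
    also have "\<dots> \<le> (K * T powr (2*q-1) * \<phi> T) * T powr (1-2*q) / K"
      using h1 K Tp by (intro divide_right_mono mult_right_mono) auto
    also have "\<dots> = \<phi> T * (T powr (1-2*q) * T powr (2*q-1))" using K by (simp add: field_simps)
    also have "\<dots> = \<phi> T" using \<open>T powr (1-2*q) * T powr (2*q-1) = 1\<close> by simp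
    finally show ?thesis .
  qed
  define \<Lambda> where "\<Lambda> T = ln (I T) - k * T powr (2-2*q) / (2-2*q)" for T
  have Lmono: "\<Lambda> T3 \<le> \<Lambda> T" if T: "T \<ge> T3" for T
  proof (rule mono_by_ftc[OF order_refl T order_refl])
    fix x assume x: "x \<in> {T3..T}"
    have xp: "x > 0" using x T3 T1 by auto
    have Ix: "I x > 0" using Ibig[of x] x B0p by auto
    have "(I has_vector_derivative \<phi> x) (at x within {T1..T})"
      unfolding I_def[abs_def] using x T3 by (intro integral_has_vector_derivative cab) auto
    hence "(I has_vector_derivative \<phi> x) (at x within {T3..T})"
      by (rule has_vector_derivative_within_subset) (use T3 in auto)
    hence dI: "(I has_real_derivative \<phi> x) (at x within {T3..T})"
      by (simp add: has_real_derivative_iff_has_vector_derivative)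
    have dP: "((\<lambda>t. t powr (2-2*q)) has_real_derivative (2-2*q) * x powr (2-2*q-1)) (at x within {T3..T})"
      by (rule has_field_derivative_at_within[OF has_real_derivative_powr[OF xp]])
    have "(\<Lambda> has_real_derivative (\<phi> x / I x - k * ((2-2*q) * x powr (2-2*q-1)) / (2-2*q))) (at x within {T3..T})"
    proof -
      have dL: "((\<lambda>z. ln (I z)) has_real_derivative inverse (I x) * \<phi> x) (at x within {T3..T})"
        by (rule DERIV_chain2[OF DERIV_ln[OF Ix] dI])
      have dK: "((\<lambda>z. k * z powr (2-2*q) / (2-2*q)) has_real_derivative k * ((2-2*q) * x powr (2-2*q-1)) / (2-2*q)) (at x within {T3..T})"
        by (rule DERIV_cdivide[OF DERIV_cmult[OF dP]])
      from DERIV_diff[OF dL dK] show ?thesis unfolding \<Lambda>_def[abs_def] by (simp add: field_simps)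
    qed
    moreover have "k * ((2-2*q) * x powr (2-2*q-1)) / (2-2*q) = k * x powr (1-2*q)"
      using q by simp
    ultimately have "(\<Lambda> has_real_derivative (\<phi> x / I x - k * x powr (1-2*q))) (at x within {T3..T})"
      by simp
    thus "(\<Lambda> has_vector_derivative (\<phi> x / I x - k * x powr (1-2*q))) (at x within {T3..T})"
      by (simp add: has_real_derivative_iff_has_vector_derivative)
    have "\<phi> x \<ge> k * x powr (1-2*q) * I x" using key[of x] x by auto
    hence "\<phi> x / I x \<ge> k * x powr (1-2*q)" using Ix by (simp add: le_divide_eq)
    thus "\<phi> x / I x - k * x powr (1-2*q) \<ge> 0" by simp
  qed
  have Bcpos: "Bc > 0"
  proof -
    have "0 < I T3" using T3 B0p by simp
    also have "I T3 \<le> Bc * T3 powr (1+q)" using poly[of T3] T3 by (simp add: I_def)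
    finally show ?thesis using T3 T1 by (simp add: zero_less_mult_iff)
  qed
  obtain T where T: "T \<ge> T3" "T > 0" and big: "k * T powr (2-2*q) / (2-2*q) - (1+q) * ln T > ln Bc - \<Lambda> T3"
    using big_T[OF q kpos, of T3 "ln Bc - \<Lambda> T3"] by blast
  have IT: "I T > 0" using Ibig[OF T(1)] B0p by simp
  have "ln (I T) \<le> ln (Bc * T powr (1+q))"
    using poly[of T] T T3 IT by (subst ln_le_cancel_iff) (auto simp: I_def)
  also have "\<dots> = ln Bc + (1+q) * ln T" using Bcpos T by (simp add: ln_mult ln_powr)
  finally have up: "ln (I T) \<le> ln Bc + (1+q) * ln T" .
  have "\<Lambda> T3 \<le> ln (I T) - k * T powr (2-2*q) / (2-2*q)" using Lmono[OF T(1)] by (simp add: \<Lambda>_def)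
  thus False using up big by linarith
qed

locale mtrigs =
  fixes f :: "'m::finite \<Rightarrow> 'a::{real_inner,complete_space} \<Rightarrow> real"
    and df :: "'m \<Rightarrow> 'a \<Rightarrow> 'a"
    and t0 \<alpha> \<beta> q p :: real
    and x0 v0 :: 'a
    and x x' x'' :: "real \<Rightarrow> 'a"
  assumes grad: "\<And>i z. (f i has_derivative (\<lambda>h. df i z \<bullet> h)) (at z)"
    and conv: "\<And>i. convex_on UNIV (f i)"
    and lip: "\<And>i. \<exists>L. L-lipschitz_on UNIV (df i)"
    and t0: "t0 > 0" and \<alpha>: "\<alpha> > 0" and \<beta>: "\<beta> > 0"
    and q: "0 < q" "q \<le> 1" and p: "0 < p" "p < 2" and qp: "q + 1 < p"
    and A3a: "\<And>z. z \<in> levelset f (Fvec f x0 + (\<chi> i. \<beta> / (2 * t0 powr p) * (norm x0)\<^sup>2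
                                                   + 1/2 * (norm v0)\<^sup>2))
               \<Longrightarrow> LPw f (Fvec f z) \<noteq> {}"
    and A3b: "\<exists>R. \<forall>Fs \<in> Fvec f ` LPw f (Fvec f x0 + (\<chi> i. \<beta> / (2 * t0 powr p) * (norm x0)\<^sup>2
                                                   + 1/2 * (norm v0)\<^sup>2)).
                 (INF z\<in>{z. Fvec f z = Fs}. norm z) \<le> R"
    and A4a: "\<And>w. Sset f w \<noteq> {}"
    and xder: "\<And>t. t \<ge> t0 \<Longrightarrow> (x has_vector_derivative x' t) (at t within {t0..})"
    and x'cont: "continuous_on {t0..} x'"
    and x''int: "\<And>T. T \<ge> t0 \<Longrightarrow> x'' integrable_on {t0..T}
                      \<and> (\<lambda>s. norm (x'' s)) integrable_on {t0..T}"
    and x'rep: "\<And>t. t \<ge> t0 \<Longrightarrow> (x'' has_integral (x' t - x' t0)) {t0..t}"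
    and eq: "AE t in lebesgue. t \<ge> t0 \<longrightarrow>
               (\<alpha> / t powr q) *\<^sub>R x' t
                 + hproj ((\<lambda>g. g + (\<beta> / t powr p) *\<^sub>R x t + x'' t) ` Cset df (x t)) 0 = 0"
    and init: "x t0 = x0" "x' t0 = v0"
begin

definition "a t = \<alpha> / t powr q"
definition "eps t = \<beta> / t powr p"
definition "m t = (MAX i. x' t \<bullet> df i (x t))"
definition "Mz z t = (MIN i. f i (x t) - f i z)"

lemma q1: "q < 1" using qp p by simp

lemma df_cont: "continuous_on UNIV (df i)"
  using lip[of i] lipschitz_on_continuous_on by blast

lemma f_cont: "continuous_on S (f i)"
  using grad[of i] by (meson continuous_at_imp_continuous_on has_derivative_continuous)

lemma x_cont: "continuous_on {t0..} x"
  unfolding continuous_on_eq_continuous_within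
  using xder has_vector_derivative_continuous by fastforce

lemma x''_t0_inner: "t \<ge> t0 \<Longrightarrow> ((\<lambda>r. x'' r \<bullet> w) has_integral ((x' t - x' t0) \<bullet> w)) {t0..t}"
  using has_integral_linear[OF x'rep bounded_linear_inner_left, of t w] by (simp add: o_def)

lemma x''_sub_inner: "t0 \<le> s \<Longrightarrow> s \<le> t \<Longrightarrow> ((\<lambda>r. x'' r \<bullet> w) has_integral ((x' t - x' s) \<bullet> w)) {s..t}"
proof -
  assume st: "t0 \<le> s" "s \<le> t"
  have ht: "((\<lambda>r. x'' r \<bullet> w) has_integral ((x' t - x' t0) \<bullet> w)) {t0..t}" using x''_t0_inner st by simp
  have hs: "((\<lambda>r. x'' r \<bullet> w) has_integral ((x' s - x' t0) \<bullet> w)) {t0..s}" using x''_t0_inner st by simp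
  have it: "(\<lambda>r. x'' r \<bullet> w) integrable_on {t0..t}" using ht by blast
  have e: "integral {t0..t} (\<lambda>r. x'' r \<bullet> w) - integral {t0..s} (\<lambda>r. x'' r \<bullet> w) = integral {s..t} (\<lambda>r. x'' r \<bullet> w)"
    by (rule integral_diff_sub[OF it]) (use st in auto)
  have i2: "(\<lambda>r. x'' r \<bullet> w) integrable_on {s..t}" using it st by (intro integrable_subinterval_real[OF it]) auto
  have "integral {s..t} (\<lambda>r. x'' r \<bullet> w) = (x' t - x' s) \<bullet> w"
    using e integral_unique[OF ht] integral_unique[OF hs] by (simp add: inner_diff_left)
  thus ?thesis using i2 by (metis has_integral_integrable_integral)
qed

lemma norm_x''_int: "t0 \<le> s \<Longrightarrow> s \<le> t \<Longrightarrow> (\<lambda>r. norm (x'' r)) integrable_on {s..t}"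
proof -
  assume st: "t0 \<le> s" "s \<le> t"
  have "(\<lambda>s. norm (x'' s)) integrable_on {t0..t}" using x''int[of t] st by auto
  from integrable_subinterval_real[OF this] show ?thesis using st by auto
qed

lemma N0_ex: "\<exists>N. negligible N \<and> (\<forall>t. t \<ge> t0 \<longrightarrow> t \<notin> N \<longrightarrow>
               (\<alpha> / t powr q) *\<^sub>R x' t
                 + hproj ((\<lambda>g. g + (\<beta> / t powr p) *\<^sub>R x t + x'' t) ` Cset df (x t)) 0 = 0)"
proof -
  from eq obtain N where N: "{t \<in> space lebesgue. \<not> (t \<ge> t0 \<longrightarrow>
               (\<alpha> / t powr q) *\<^sub>R x' t
                 + hproj ((\<lambda>g. g + (\<beta> / t powr p) *\<^sub>R x t + x'' t) ` Cset df (x t)) 0 = 0)} \<subseteq> N"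
      "emeasure lebesgue N = 0" "N \<in> sets lebesgue"
    by (rule AE_E)
  have "negligible N" using N(2,3) by (simp add: negligible_iff_null_sets null_sets_def)
  thus ?thesis using N(1) by (intro exI[of _ N]) auto
qed

lemma pointwise:
  assumes t: "t \<ge> t0" and eqt: "(\<alpha> / t powr q) *\<^sub>R x' t
                 + hproj ((\<lambda>g. g + (\<beta> / t powr p) *\<^sub>R x t + x'' t) ` Cset df (x t)) 0 = 0"
  shows "x'' t \<bullet> x' t = - a t * (norm (x' t))\<^sup>2 - eps t * (x t \<bullet> x' t) - m t"
    and "\<And>z. x'' t \<bullet> (x t - z) \<le> - a t * ((x t - z) \<bullet> x' t) - eps t * (x t \<bullet> (x t - z)) - Mz z t"
proof -
  define w where "w = (\<beta> / t powr p) *\<^sub>R x t + x'' t"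
  define C where "C = Cset df (x t)"
  define S where "S = (\<lambda>g. g + w) ` C"
  have Cc: "compact C" unfolding C_def Cset_def by (rule finite_imp_compact_convex_hull) simp
  have Cne: "C \<noteq> {}" unfolding C_def Cset_def by simp
  have Ccv: "convex C" unfolding C_def Cset_def by simp
  have Sc: "compact S" unfolding S_def by (rule compact_continuous_image[OF _ Cc]) (intro continuous_intros)
  have Sne: "S \<noteq> {}" using Cne by (simp add: S_def)
  have Scv: "convex S"
  proof -
    have "S = (+) w ` C" by (auto simp: S_def add.commute)
    thus ?thesis using Ccv by (simp add: convex_translation)
  qed
  define \<xi> where "\<xi> = hproj S 0"
  have hp: "\<xi> \<in> S" "\<forall>y\<in>S. norm \<xi> \<le> norm y" using hproj_prop[OF Sc Sne] by (auto simp: \<xi>_def)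
  have ta: "t > 0" using t t0 by simp
  have apos: "a t > 0" using ta \<alpha> by (simp add: a_def)
  have "a t *\<^sub>R x' t + \<xi> = 0" using eqt unfolding \<xi>_def S_def w_def a_def C_def by (simp add: add.assoc)
  hence \<xi>eq: "\<xi> = - (a t *\<^sub>R x' t)" by (metis add.commute neg_eq_iff_add_eq_0)
  obtain g0 where g0: "g0 \<in> C" "\<xi> = g0 + w" using hp(1) by (auto simp: S_def)
  have x''eq: "x'' t = - a t *\<^sub>R x' t - eps t *\<^sub>R x t - g0"
    using g0(2) \<xi>eq by (simp add: w_def eps_def algebra_simps)
  have vi: "x' t \<bullet> y \<le> x' t \<bullet> g0" if y: "y \<in> C" for y
  proof -
    have "y + w \<in> S" using y by (simp add: S_def)
    from minnorm_vi[OF Scv hp(1) hp(2) this] have "\<xi> \<bullet> (y + w - \<xi>) \<ge> 0" .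
    moreover have "y + w - \<xi> = y - g0" using g0(2) by simp
    ultimately have "\<xi> \<bullet> (y - g0) \<ge> 0" by simp
    hence "- (a t * (x' t \<bullet> (y - g0))) \<ge> 0" unfolding \<xi>eq by simp
    hence "x' t \<bullet> (y - g0) \<le> 0" using apos by (simp add: mult_le_0_iff)
    thus ?thesis by (simp add: inner_diff_right)
  qed
  have gen: "df i (x t) \<in> C" for i unfolding C_def Cset_def by (rule hull_inc) simp
  have mle: "m t \<le> x' t \<bullet> g0" unfolding m_def using vi[OF gen] by (simp add: Max_le_iff)
  have mge: "x' t \<bullet> g0 \<le> m t" unfolding m_def using hull_inner_le[of g0 "\<lambda>i. df i (x t)" "x' t"] g0(1)
    by (simp add: C_def Cset_def)
  have g0m: "x' t \<bullet> g0 = m t" using mle mge by simp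
  show "x'' t \<bullet> x' t = - a t * (norm (x' t))\<^sup>2 - eps t * (x t \<bullet> x' t) - m t"
    unfolding x''eq using g0m by (simp add: inner_diff_left inner_diff_right power2_norm_eq_inner inner_commute)
  fix z
  have "(x t - z) \<bullet> g0 \<ge> (MIN i. (x t - z) \<bullet> df i (x t))"
    using hull_inner_ge[of g0 "\<lambda>i. df i (x t)" "x t - z"] g0(1) by (simp add: C_def Cset_def)
  moreover have "(MIN i. (x t - z) \<bullet> df i (x t)) \<ge> Mz z t"
  proof -
    have "Mz z t \<le> (x t - z) \<bullet> df i (x t)" for i
    proof -
      have "Mz z t \<le> f i (x t) - f i z" unfolding Mz_def by (rule Min_le) auto
      moreover have "f i z \<ge> f i (x t) + df i (x t) \<bullet> (z - x t)" by (rule conv_grad[OF conv grad])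
      ultimately show ?thesis by (simp add: inner_diff_right inner_diff_left inner_commute)
    qed
    thus ?thesis by (simp add: Min_ge_iff)
  qed
  ultimately have g0M: "(x t - z) \<bullet> g0 \<ge> Mz z t" by linarith
  show "x'' t \<bullet> (x t - z) \<le> - a t * ((x t - z) \<bullet> x' t) - eps t * (x t \<bullet> (x t - z)) - Mz z t"
  proof -
    have "x'' t \<bullet> (x t - z) = - a t * (x' t \<bullet> (x t - z)) - eps t * (x t \<bullet> (x t - z)) - g0 \<bullet> (x t - z)"
      unfolding x''eq by (simp only: inner_diff_left inner_minus_left inner_scaleR_left)
    thus ?thesis using g0M unfolding inner_commute[of "x' t" "x t - z"] inner_commute[of g0 "x t - z"] by linarith
  qed
qed

end

lemma l2g_eq:
  fixes H G :: "real \<Rightarrow> real"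
  assumes ab: "a \<le> b" and G: "\<And>s t. a \<le> s \<Longrightarrow> s \<le> t \<Longrightarrow> t \<le> b \<Longrightarrow> G s \<le> G t"
    and loc: "\<And>e. e > 0 \<Longrightarrow> \<exists>d>0. \<forall>s t. a \<le> s \<longrightarrow> s \<le> t \<longrightarrow> t \<le> b \<longrightarrow> t - s < d
                 \<longrightarrow> \<bar>H t - H s\<bar> \<le> e * (G t - G s)"
  shows "H b = H a"
proof -
  have "H b \<le> H a"
    by (rule l2g[OF ab G]) (use loc in \<open>force+\<close>)
  moreover have "(\<lambda>t. - H t) b \<le> (\<lambda>t. - H t) a"
  proof (rule l2g[OF ab G])
    fix e :: real assume "e > 0"
    from loc[OF this] obtain d where "d > 0" "\<forall>s t. a \<le> s \<longrightarrow> s \<le> t \<longrightarrow> t \<le> b \<longrightarrow> t - s < d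
                 \<longrightarrow> \<bar>H t - H s\<bar> \<le> e * (G t - G s)" by blast
    thus "\<exists>d>0. \<forall>s t. a \<le> s \<longrightarrow> s \<le> t \<longrightarrow> t \<le> b \<longrightarrow> t - s < d \<longrightarrow> - H t - - H s \<le> e * (G t - G s)"
      by (intro exI[of _ d]) force
  qed auto
  ultimately show ?thesis by simp
qed

context mtrigs begin

definition "N0 = (SOME N. negligible N \<and> (\<forall>t. t \<ge> t0 \<longrightarrow> t \<notin> N \<longrightarrow>
               (\<alpha> / t powr q) *\<^sub>R x' t
                 + hproj ((\<lambda>g. g + (\<beta> / t powr p) *\<^sub>R x t + x'' t) ` Cset df (x t)) 0 = 0))"

lemma N0: "negligible N0" "\<And>t. t \<ge> t0 \<Longrightarrow> t \<notin> N0 \<Longrightarrow>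
               (\<alpha> / t powr q) *\<^sub>R x' t
                 + hproj ((\<lambda>g. g + (\<beta> / t powr p) *\<^sub>R x t + x'' t) ` Cset df (x t)) 0 = 0"
  using someI_ex[OF N0_ex] unfolding N0_def[symmetric] by blast+

lemma P1: "t \<ge> t0 \<Longrightarrow> t \<notin> N0 \<Longrightarrow> x'' t \<bullet> x' t = - a t * (norm (x' t))\<^sup>2 - eps t * (x t \<bullet> x' t) - m t"
  using pointwise(1) N0(2) by blast

lemma P2: "t \<ge> t0 \<Longrightarrow> t \<notin> N0 \<Longrightarrow> x'' t \<bullet> (x t - z) \<le> - a t * ((x t - z) \<bullet> x' t) - eps t * (x t \<bullet> (x t - z)) - Mz z t"
  using pointwise(2) N0(2) by blast

lemma a_cont: "continuous_on {t0..} a"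
  unfolding a_def[abs_def] using t0 by (intro continuous_intros) auto

lemma eps_cont: "continuous_on {t0..} eps"
  unfolding eps_def[abs_def] using t0 by (intro continuous_intros) auto

lemma dfx_cont: "continuous_on {t0..} (\<lambda>t. df i (x t))"
  by (rule continuous_on_compose2[OF df_cont x_cont]) auto

lemma fx_cont: "continuous_on {t0..} (\<lambda>t. f i (x t))"
  by (rule continuous_on_compose2[OF f_cont x_cont]) auto

lemma m_cont: "continuous_on {t0..} m"
  unfolding m_def[abs_def] by (intro continuous_on_MAX continuous_intros x'cont dfx_cont)

lemma Mz_cont: "continuous_on {t0..} (Mz z)"
  unfolding Mz_def[abs_def] by (intro continuous_on_MIN continuous_intros fx_cont)

definition "psi t = - a t * (norm (x' t))\<^sup>2 - eps t * (x t \<bullet> x' t) - m t"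

lemma psi_cont: "continuous_on {t0..} psi"
  unfolding psi_def[abs_def] by (intro continuous_intros a_cont eps_cont m_cont x_cont x'cont)

lemma cont_sub: "continuous_on {t0..} g \<Longrightarrow> t0 \<le> s \<Longrightarrow> continuous_on {s..t} g"
  by (rule continuous_on_subset) auto

lemma int_sub: "continuous_on {t0..} (g::real\<Rightarrow>real) \<Longrightarrow> t0 \<le> s \<Longrightarrow> g integrable_on {s..t}"
  by (rule integrable_continuous_interval[OF cont_sub])

lemma unif_x': "t0 \<le> s \<Longrightarrow> uniformly_continuous_on {s..t} x'"
  by (intro compact_uniformly_continuous cont_sub[OF x'cont]) auto

lemma unif_x: "t0 \<le> s \<Longrightarrow> uniformly_continuous_on {s..t} x"
  by (intro compact_uniformly_continuous cont_sub[OF x_cont]) auto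

lemma E1: "t \<ge> t0 \<Longrightarrow> (norm (x' t))\<^sup>2 / 2 = (norm v0)\<^sup>2 / 2 + integral {t0..t} psi"
proof -
  assume T: "t \<ge> t0"
  define H where "H \<tau> = (norm (x' \<tau>))\<^sup>2 / 2 - integral {t0..\<tau>} psi" for \<tau>
  define G where "G \<tau> = integral {t0..\<tau>} (\<lambda>r. norm (x'' r))" for \<tau>
  have Gm: "G \<sigma> \<le> G \<tau>" if "t0 \<le> \<sigma>" "\<sigma> \<le> \<tau>" "\<tau> \<le> t" for \<sigma> \<tau>
  proof -
    have "G \<tau> - G \<sigma> = integral {\<sigma>..\<tau>} (\<lambda>r. norm (x'' r))"
      unfolding G_def by (rule integral_diff_sub[OF norm_x''_int[of t0 \<tau>]]) (use that in auto)
    moreover have "integral {\<sigma>..\<tau>} (\<lambda>r. norm (x'' r)) \<ge> 0"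
      using norm_x''_int[of \<sigma> \<tau>] that by (intro Henstock_Kurzweil_Integration.integral_nonneg) auto
    ultimately show ?thesis by simp
  qed
  have "H t = H t0"
  proof (rule l2g_eq[OF T Gm])
    fix e :: real assume e: "e > 0"
    obtain d where d: "d > 0" and dd: "\<And>u v. u \<in> {t0..t} \<Longrightarrow> v \<in> {t0..t} \<Longrightarrow> dist v u < d \<Longrightarrow> dist (x' v) (x' u) < e"
      using unif_x'[of t0 t, unfolded uniformly_continuous_on_def] e by force
    show "\<exists>d>0. \<forall>s t'. t0 \<le> s \<longrightarrow> s \<le> t' \<longrightarrow> t' \<le> t \<longrightarrow> t' - s < d \<longrightarrow> \<bar>H t' - H s\<bar> \<le> e * (G t' - G s)"
    proof (intro exI[of _ d] conjI allI impI d)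
      fix \<sigma> \<tau> assume st: "t0 \<le> \<sigma>" "\<sigma> \<le> \<tau>" "\<tau> \<le> t" "\<tau> - \<sigma> < d"
      define w where "w = (1/2) *\<^sub>R (x' \<tau> + x' \<sigma>)"
      have hx: "((\<lambda>r. x'' r \<bullet> w) has_integral ((x' \<tau> - x' \<sigma>) \<bullet> w)) {\<sigma>..\<tau>}"
        by (rule x''_sub_inner) (use st in auto)
      have kin: "(x' \<tau> - x' \<sigma>) \<bullet> w = (norm (x' \<tau>))\<^sup>2 / 2 - (norm (x' \<sigma>))\<^sup>2 / 2"
        unfolding w_def by (simp add: inner_diff_left inner_diff_right inner_add_right inner_add_left power2_norm_eq_inner inner_commute[of "x' \<sigma>" "x' \<tau>"] field_simps)
      have ipsi: "integral {t0..\<tau>} psi - integral {t0..\<sigma>} psi = integral {\<sigma>..\<tau>} psi"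
        by (rule integral_diff_sub[OF int_sub[OF psi_cont]]) (use st in auto)
      have iG: "G \<tau> - G \<sigma> = integral {\<sigma>..\<tau>} (\<lambda>r. norm (x'' r))"
        unfolding G_def by (rule integral_diff_sub[OF norm_x''_int[of t0 \<tau>]]) (use st in auto)
      have Hd: "H \<tau> - H \<sigma> = integral {\<sigma>..\<tau>} (\<lambda>r. x'' r \<bullet> w - psi r)"
      proof -
        have "integral {\<sigma>..\<tau>} (\<lambda>r. x'' r \<bullet> w - psi r) = integral {\<sigma>..\<tau>} (\<lambda>r. x'' r \<bullet> w) - integral {\<sigma>..\<tau>} psi"
          using hx int_sub[OF psi_cont, of \<sigma> \<tau>] st by (intro integral_diff) auto
        thus ?thesis using kin ipsi integral_unique[OF hx] by (simp add: H_def)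
      qed
      have wc: "norm (w - x' r) \<le> e" if r: "r \<in> {\<sigma>..\<tau>}" for r
      proof -
        have "dist (x' \<tau>) (x' r) < e" using dd[of r \<tau>] r st by (auto simp: dist_real_def)
        moreover have "dist (x' \<sigma>) (x' r) < e" using dd[of r \<sigma>] r st by (auto simp: dist_real_def)
        moreover have "w - x' r = (1/2) *\<^sub>R (x' \<tau> - x' r) + (1/2) *\<^sub>R (x' \<sigma> - x' r)"
          by (simp add: w_def algebra_simps flip: scaleR_add_left)
        ultimately have h1: "norm (x' \<tau> - x' r) < e" "norm (x' \<sigma> - x' r) < e"
          and h2: "w - x' r = (1/2) *\<^sub>R (x' \<tau> - x' r) + (1/2) *\<^sub>R (x' \<sigma> - x' r)"
          by (simp_all add: dist_norm)
        have "norm (w - x' r) \<le> norm ((1/2) *\<^sub>R (x' \<tau> - x' r)) + norm ((1/2) *\<^sub>R (x' \<sigma> - x' r))"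
          unfolding h2 by (rule norm_triangle_ineq)
        also have "\<dots> = norm (x' \<tau> - x' r) / 2 + norm (x' \<sigma> - x' r) / 2" by simp
        finally show ?thesis using h1 by linarith
      qed
      have i1: "(\<lambda>r. x'' r \<bullet> w - psi r) integrable_on {\<sigma>..\<tau>}"
        using hx int_sub[OF psi_cont, of \<sigma> \<tau>] st by (intro integrable_diff) auto
      have i2: "(\<lambda>r. e * norm (x'' r)) integrable_on {\<sigma>..\<tau>}"
        using norm_x''_int[of \<sigma> \<tau>] st by (intro integrable_on_mult_right) auto
      have pt: "\<bar>x'' r \<bullet> w - psi r\<bar> \<le> e * norm (x'' r)" if r: "r \<in> {\<sigma>..\<tau>} - N0" for r
      proof -
        have "psi r = x'' r \<bullet> x' r" using P1[of r] r st by (simp add: psi_def)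
        hence "x'' r \<bullet> w - psi r = x'' r \<bullet> (w - x' r)" by (simp add: inner_diff_right)
        also have "\<bar>\<dots>\<bar> \<le> norm (x'' r) * norm (w - x' r)" by (rule Cauchy_Schwarz_ineq2)
        also have "\<dots> \<le> norm (x'' r) * e" using wc r by (intro mult_left_mono) auto
        finally show ?thesis by (simp add: mult.commute)
      qed
      have up: "integral {\<sigma>..\<tau>} (\<lambda>r. x'' r \<bullet> w - psi r) \<le> integral {\<sigma>..\<tau>} (\<lambda>r. e * norm (x'' r))"
        by (rule integral_le_ae[OF i1 i2 N0(1)]) (use pt in force)
      have lo: "integral {\<sigma>..\<tau>} (\<lambda>r. - (x'' r \<bullet> w - psi r)) \<le> integral {\<sigma>..\<tau>} (\<lambda>r. e * norm (x'' r))"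
        by (rule integral_le_ae[OF integrable_neg[OF i1] i2 N0(1)]) (use pt in force)
      have "integral {\<sigma>..\<tau>} (\<lambda>r. e * norm (x'' r)) = e * (G \<tau> - G \<sigma>)" using iG by simp
      moreover have lo2: "- integral {\<sigma>..\<tau>} (\<lambda>r. x'' r \<bullet> w - psi r) \<le> integral {\<sigma>..\<tau>} (\<lambda>r. e * norm (x'' r))"
        using lo unfolding integral_neg .
      ultimately show "\<bar>H \<tau> - H \<sigma>\<bar> \<le> e * (G \<tau> - G \<sigma>)" using up Hd unfolding abs_le_iff by linarith
    qed
  qed
  thus ?thesis using init(2) by (simp add: H_def)
qed

end

lemma vd_inner_left:
  fixes g :: "real \<Rightarrow> 'a::real_inner"
  assumes "(g has_vector_derivative v) F"
  shows "((\<lambda>r. g r \<bullet> c) has_vector_derivative (v \<bullet> c)) F"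
proof -
  have "(g has_derivative (\<lambda>h. h *\<^sub>R v)) F" using assms by (simp add: has_vector_derivative_def)
  hence "((\<lambda>r. g r \<bullet> c) has_derivative (\<lambda>h. (h *\<^sub>R v) \<bullet> c)) F" by (rule has_derivative_inner_left)
  thus ?thesis by (simp add: has_vector_derivative_def)
qed

context mtrigs begin

lemma xder_sub: "t0 \<le> s \<Longrightarrow> r \<in> {s..t} \<Longrightarrow> (x has_vector_derivative x' r) (at r within {s..t})"
  by (rule has_vector_derivative_within_subset[OF xder]) auto

lemma x_ftc_inner: "t0 \<le> s \<Longrightarrow> s \<le> t \<Longrightarrow> ((\<lambda>r. x' r \<bullet> c) has_integral ((x t - x s) \<bullet> c)) {s..t}"
proof -
  assume st: "t0 \<le> s" "s \<le> t"
  have "((\<lambda>r. x' r \<bullet> c) has_integral ((\<lambda>r. x r \<bullet> c) t - (\<lambda>r. x r \<bullet> c) s)) {s..t}"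
    by (rule fundamental_theorem_of_calculus[OF st(2)]) (intro vd_inner_left xder_sub st(1))
  thus ?thesis by (simp add: inner_diff_left)
qed

definition "rho z t = - a t * ((x t - z) \<bullet> x' t) - eps t * (x t \<bullet> (x t - z)) - Mz z t"
definition "Yf z t = (x t - z) \<bullet> x' t"
definition "Dz z t = Yf z t - integral {t0..t} (\<lambda>r. (norm (x' r))\<^sup>2 + rho z r)"

lemma rho_cont: "continuous_on {t0..} (rho z)"
  unfolding rho_def[abs_def] by (intro continuous_intros a_cont eps_cont Mz_cont x_cont x'cont)

lemma Yf_cont: "continuous_on {t0..} (Yf z)"
  unfolding Yf_def[abs_def] by (intro continuous_intros x_cont x'cont)

lemma J_cont: "continuous_on {t0..} (\<lambda>r. (norm (x' r))\<^sup>2 + rho z r)"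
  by (intro continuous_intros rho_cont x'cont)

lemma D_mono: "t0 \<le> s \<Longrightarrow> s \<le> t \<Longrightarrow> Dz z t \<le> Dz z s"
proof -
  assume st0: "t0 \<le> s" "s \<le> t"
  obtain B where B: "\<And>r. r \<in> {s..t} \<Longrightarrow> norm (x' r) \<le> B"
    using compact_imp_bounded[OF compact_continuous_image[OF cont_sub[OF x'cont st0(1)] compact_Icc]]
    unfolding bounded_iff by fastforce
  have "norm (x' s) \<le> B" by (rule B) (use st0 in auto)
  hence Bnn: "B \<ge> 0" by (rule order_trans[OF norm_ge_zero])
  define G where "G \<tau> = B * \<tau> + integral {t0..\<tau>} (\<lambda>r. norm (x'' r))" for \<tau>
  have iG: "G \<tau> - G \<sigma> = B * (\<tau> - \<sigma>) + integral {\<sigma>..\<tau>} (\<lambda>r. norm (x'' r))"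
    if "t0 \<le> \<sigma>" "\<sigma> \<le> \<tau>" for \<sigma> \<tau>
  proof -
    have "integral {t0..\<tau>} (\<lambda>r. norm (x'' r)) - integral {t0..\<sigma>} (\<lambda>r. norm (x'' r)) = integral {\<sigma>..\<tau>} (\<lambda>r. norm (x'' r))"
      by (rule integral_diff_sub[OF norm_x''_int[of t0 \<tau>]]) (use that in auto)
    thus ?thesis by (simp add: G_def algebra_simps)
  qed
  have Gm: "G \<sigma> \<le> G \<tau>" if "s \<le> \<sigma>" "\<sigma> \<le> \<tau>" "\<tau> \<le> t" for \<sigma> \<tau>
  proof -
    have "integral {\<sigma>..\<tau>} (\<lambda>r. norm (x'' r)) \<ge> 0"
      using norm_x''_int[of \<sigma> \<tau>] that st0 by (intro Henstock_Kurzweil_Integration.integral_nonneg) auto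
    moreover have "B * (\<tau> - \<sigma>) \<ge> 0" using Bnn that by simp
    ultimately show ?thesis using iG[of \<sigma> \<tau>] that st0 by simp
  qed
  show "Dz z t \<le> Dz z s"
  proof (rule l2g[OF st0(2) Gm])
    fix e :: real assume e: "e > 0"
    obtain d1 where d1: "d1 > 0" and dd1: "\<And>u v. u \<in> {s..t} \<Longrightarrow> v \<in> {s..t} \<Longrightarrow> dist v u < d1 \<Longrightarrow> dist (x' v) (x' u) < e"
      using unif_x'[of s t, unfolded uniformly_continuous_on_def] e st0 by force
    obtain d2 where d2: "d2 > 0" and dd2: "\<And>u v. u \<in> {s..t} \<Longrightarrow> v \<in> {s..t} \<Longrightarrow> dist v u < d2 \<Longrightarrow> dist (x v) (x u) < e"
      using unif_x[of s t, unfolded uniformly_continuous_on_def] e st0 by force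
    show "\<exists>d>0. \<forall>\<sigma> \<tau>. s \<le> \<sigma> \<longrightarrow> \<sigma> \<le> \<tau> \<longrightarrow> \<tau> \<le> t \<longrightarrow> \<tau> - \<sigma> < d \<longrightarrow> Dz z \<tau> - Dz z \<sigma> \<le> e * (G \<tau> - G \<sigma>)"
    proof (intro exI[of _ "min d1 d2"] conjI allI impI)
      show "min d1 d2 > 0" using d1 d2 by simp
      fix \<sigma> \<tau> assume st: "s \<le> \<sigma>" "\<sigma> \<le> \<tau>" "\<tau> \<le> t" "\<tau> - \<sigma> < min d1 d2"
      have t0\<sigma>: "t0 \<le> \<sigma>" using st st0 by simp
      define J where "J r = (norm (x' r))\<^sup>2 + rho z r" for r
      have Jint: "J integrable_on {\<sigma>..\<tau>}" unfolding J_def by (rule int_sub[OF J_cont t0\<sigma>])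
      have iJ: "integral {t0..\<tau>} J - integral {t0..\<sigma>} J = integral {\<sigma>..\<tau>} J"
        unfolding J_def by (rule integral_diff_sub[OF int_sub[OF J_cont]]) (use st st0 in auto)
      have h1: "((\<lambda>r. x' r \<bullet> x' \<tau>) has_integral ((x \<tau> - x \<sigma>) \<bullet> x' \<tau>)) {\<sigma>..\<tau>}"
        by (rule x_ftc_inner[OF t0\<sigma> st(2)])
      have nx'int: "(\<lambda>r. (norm (x' r))\<^sup>2) integrable_on {\<sigma>..\<tau>}"
        by (rule int_sub[OF _ t0\<sigma>]) (intro continuous_intros x'cont)
      have part1: "(x \<tau> - x \<sigma>) \<bullet> x' \<tau> - integral {\<sigma>..\<tau>} (\<lambda>r. (norm (x' r))\<^sup>2) \<le> e * B * (\<tau> - \<sigma>)"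
      proof -
        have "(x \<tau> - x \<sigma>) \<bullet> x' \<tau> - integral {\<sigma>..\<tau>} (\<lambda>r. (norm (x' r))\<^sup>2)
            = integral {\<sigma>..\<tau>} (\<lambda>r. x' r \<bullet> x' \<tau> - (norm (x' r))\<^sup>2)"
          using integral_diff[OF has_integral_integrable[OF h1] nx'int] integral_unique[OF h1] by simp
        also have "\<dots> \<le> integral {\<sigma>..\<tau>} (\<lambda>r. e * B)"
        proof (rule integral_le)
          show "(\<lambda>r. x' r \<bullet> x' \<tau> - (norm (x' r))\<^sup>2) integrable_on {\<sigma>..\<tau>}"
            using has_integral_integrable[OF h1] nx'int by (rule integrable_diff)
          show "(\<lambda>r. e * B) integrable_on {\<sigma>..\<tau>}" by (rule integrable_const_ivl)
          fix r assume r: "r \<in> {\<sigma>..\<tau>}"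
          have "x' r \<bullet> x' \<tau> - (norm (x' r))\<^sup>2 = x' r \<bullet> (x' \<tau> - x' r)"
            by (simp add: inner_diff_right power2_norm_eq_inner)
          also have "\<dots> \<le> norm (x' r) * norm (x' \<tau> - x' r)" by (rule norm_cauchy_schwarz)
          also have "\<dots> \<le> B * e"
          proof (rule mult_mono)
            show "norm (x' r) \<le> B" using B r st by auto
            have "dist (x' \<tau>) (x' r) < e" using dd1[of r \<tau>] r st by (auto simp: dist_real_def)
            thus "norm (x' \<tau> - x' r) \<le> e" by (simp add: dist_norm)
          qed (use Bnn in auto)
          finally show "x' r \<bullet> x' \<tau> - (norm (x' r))\<^sup>2 \<le> e * B" by (simp add: mult.commute)
        qed
        also have "\<dots> = e * B * (\<tau> - \<sigma>)" using st by simp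
        finally show ?thesis .
      qed
      have h2: "((\<lambda>r. x'' r \<bullet> (x \<sigma> - z)) has_integral ((x' \<tau> - x' \<sigma>) \<bullet> (x \<sigma> - z))) {\<sigma>..\<tau>}"
        by (rule x''_sub_inner[OF t0\<sigma> st(2)])
      have rint: "rho z integrable_on {\<sigma>..\<tau>}" by (rule int_sub[OF rho_cont t0\<sigma>])
      have nint: "(\<lambda>r. e * norm (x'' r)) integrable_on {\<sigma>..\<tau>}"
        using norm_x''_int[OF t0\<sigma> st(2)] by (rule integrable_on_mult_right)
      have part2: "(x' \<tau> - x' \<sigma>) \<bullet> (x \<sigma> - z) - integral {\<sigma>..\<tau>} (rho z) \<le> e * integral {\<sigma>..\<tau>} (\<lambda>r. norm (x'' r))"
      proof -
        have "(x' \<tau> - x' \<sigma>) \<bullet> (x \<sigma> - z) - integral {\<sigma>..\<tau>} (rho z)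
            = integral {\<sigma>..\<tau>} (\<lambda>r. x'' r \<bullet> (x \<sigma> - z) - rho z r)"
          using integral_diff[OF has_integral_integrable[OF h2] rint] integral_unique[OF h2] by simp
        also have "\<dots> \<le> integral {\<sigma>..\<tau>} (\<lambda>r. e * norm (x'' r))"
        proof (rule integral_le_ae[OF _ nint N0(1)])
          show "(\<lambda>r. x'' r \<bullet> (x \<sigma> - z) - rho z r) integrable_on {\<sigma>..\<tau>}"
            using has_integral_integrable[OF h2] rint by (rule integrable_diff)
          fix r assume r: "r \<in> {\<sigma>..\<tau>} - N0"
          have rt0: "r \<ge> t0" using r t0\<sigma> by auto
          have p2: "x'' r \<bullet> (x r - z) \<le> rho z r"
            using P2[OF rt0, of z] r by (simp add: rho_def)
          have "x'' r \<bullet> (x \<sigma> - z) = x'' r \<bullet> (x r - z) + x'' r \<bullet> (x \<sigma> - x r)"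
            by (simp add: inner_diff_right)
          moreover have "x'' r \<bullet> (x \<sigma> - x r) \<le> norm (x'' r) * norm (x \<sigma> - x r)" by (rule norm_cauchy_schwarz)
          moreover have "norm (x'' r) * norm (x \<sigma> - x r) \<le> norm (x'' r) * e"
          proof (rule mult_left_mono)
            have "dist (x \<sigma>) (x r) < e" using dd2[of r \<sigma>] r st by (auto simp: dist_real_def)
            thus "norm (x \<sigma> - x r) \<le> e" by (simp add: dist_norm)
          qed simp
          ultimately show "x'' r \<bullet> (x \<sigma> - z) - rho z r \<le> e * norm (x'' r)" using p2 by (simp add: mult.commute)
        qed
        also have "\<dots> = e * integral {\<sigma>..\<tau>} (\<lambda>r. norm (x'' r))" by simp
        finally show ?thesis .
      qed
      have Ysplit: "Yf z \<tau> - Yf z \<sigma> = (x \<tau> - x \<sigma>) \<bullet> x' \<tau> + (x' \<tau> - x' \<sigma>) \<bullet> (x \<sigma> - z)"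
        by (simp add: Yf_def inner_diff_left inner_diff_right inner_commute)
      have Jsplit: "integral {\<sigma>..\<tau>} J = integral {\<sigma>..\<tau>} (\<lambda>r. (norm (x' r))\<^sup>2) + integral {\<sigma>..\<tau>} (rho z)"
        unfolding J_def using nx'int rint by (rule integral_add)
      have "Dz z \<tau> - Dz z \<sigma> = Yf z \<tau> - Yf z \<sigma> - integral {\<sigma>..\<tau>} J"
      proof -
        have Jeq: "(\<lambda>r. (norm (x' r))\<^sup>2 + rho z r) = J" by (simp add: J_def[abs_def])
        show ?thesis using iJ unfolding Dz_def Jeq by linarith
      qed
      also have "\<dots> \<le> e * B * (\<tau> - \<sigma>) + e * integral {\<sigma>..\<tau>} (\<lambda>r. norm (x'' r))"
        using part1 part2 Ysplit Jsplit by linarith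
      also have "\<dots> = e * (B * (\<tau> - \<sigma>) + integral {\<sigma>..\<tau>} (\<lambda>r. norm (x'' r)))" by (simp add: algebra_simps)
      also have "\<dots> = e * (G \<tau> - G \<sigma>)" using iG[OF t0\<sigma> st(2)] by simp
      finally show "Dz z \<tau> - Dz z \<sigma> \<le> e * (G \<tau> - G \<sigma>)" .
    qed
  qed
qed

end

lemma vd_inner_self:
  fixes g :: "real \<Rightarrow> 'a::real_inner"
  assumes "(g has_vector_derivative v) (at t within S)"
  shows "((\<lambda>r. (norm (g r))\<^sup>2) has_vector_derivative (2 * (g t \<bullet> v))) (at t within S)"
proof -
  have d: "(g has_derivative (\<lambda>h. h *\<^sub>R v)) (at t within S)" using assms by (simp add: has_vector_derivative_def)
  have "((\<lambda>r. g r \<bullet> g r) has_derivative (\<lambda>h. g t \<bullet> (h *\<^sub>R v) + (h *\<^sub>R v) \<bullet> g t)) (at t within S)"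
    by (rule has_derivative_inner[OF d d])
  moreover have "(\<lambda>h. g t \<bullet> (h *\<^sub>R v) + (h *\<^sub>R v) \<bullet> g t) = (\<lambda>h. h *\<^sub>R (2 * (g t \<bullet> v)))"
    by (rule ext) (simp add: inner_commute algebra_simps)
  ultimately show ?thesis by (simp add: has_vector_derivative_def power2_norm_eq_inner)
qed

lemma powr_der:
  fixes t r :: real
  assumes "t > 0"
  shows "((\<lambda>s. s powr r) has_vector_derivative (r * t powr (r - 1))) (at t within S)"
  using has_field_derivative_at_within[OF has_real_derivative_powr[OF assms]]
  by (simp add: has_real_derivative_iff_has_vector_derivative)

context mtrigs begin

definition "h t = integral {t0..t} m"
definition "W t = h t + (norm (x' t))\<^sup>2 / 2 + eps t * (norm (x t))\<^sup>2 / 2"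
definition "epsd t = - (p * \<beta> / t powr (p + 1))"
definition "Wd t = - a t * (norm (x' t))\<^sup>2 + epsd t * (norm (x t))\<^sup>2 / 2"

lemma h_der: "t0 \<le> \<tau> \<Longrightarrow> \<tau> \<le> T \<Longrightarrow> (h has_vector_derivative m \<tau>) (at \<tau> within {t0..T})"
  unfolding h_def[abs_def] by (intro integral_has_vector_derivative cont_sub[OF m_cont]) auto

lemma K1_der: "t0 \<le> \<tau> \<Longrightarrow> \<tau> \<le> T \<Longrightarrow> ((\<lambda>t. (norm (x' t))\<^sup>2 / 2) has_vector_derivative psi \<tau>) (at \<tau> within {t0..T})"
proof -
  assume tt: "t0 \<le> \<tau>" "\<tau> \<le> T"
  have "((\<lambda>t. (norm v0)\<^sup>2 / 2 + integral {t0..t} psi) has_vector_derivative (0 + psi \<tau>)) (at \<tau> within {t0..T})"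
    by (intro derivative_intros integral_has_vector_derivative cont_sub[OF psi_cont]) (use tt in auto)
  hence d: "((\<lambda>t. (norm v0)\<^sup>2 / 2 + integral {t0..t} psi) has_vector_derivative psi \<tau>) (at \<tau> within {t0..T})"
    by simp
  show ?thesis
  proof (rule has_vector_derivative_transform[OF _ _ d])
    show "\<tau> \<in> {t0..T}" using tt by simp
    fix s assume "s \<in> {t0..T}"
    thus "(norm (x' s))\<^sup>2 / 2 = (norm v0)\<^sup>2 / 2 + integral {t0..s} psi" using E1[of s] by simp
  qed
qed

lemma eps_der: "t0 \<le> \<tau> \<Longrightarrow> \<tau> \<le> T \<Longrightarrow> (eps has_real_derivative epsd \<tau>) (at \<tau> within {t0..T})"
proof -
  assume tt: "t0 \<le> \<tau>" "\<tau> \<le> T"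
  have tp: "\<tau> > 0" using tt t0 by simp
  have d: "((\<lambda>s. \<beta> * s powr (-p)) has_real_derivative (\<beta> * (-p * \<tau> powr (-p - 1)))) (at \<tau> within {t0..T})"
    by (rule DERIV_cmult[OF has_field_derivative_at_within[OF has_real_derivative_powr[OF tp]]])
  have e1: "\<beta> * (-p * \<tau> powr (-p - 1)) = epsd \<tau>"
  proof -
    have "\<tau> powr (-p - 1) = inverse (\<tau> powr (p + 1))" using tp by (simp add: powr_minus[symmetric])
    thus ?thesis by (simp add: epsd_def field_simps)
  qed
  have e2: "\<beta> * s powr (-p) = eps s" if "s \<in> {t0..T}" for s
    using that t0 by (simp add: eps_def powr_minus field_simps)
  show ?thesis
    by (rule has_field_derivative_transform_within[OF d[unfolded e1], of 1]) (use tt e2 in auto)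
qed

lemma W_der: "t0 \<le> \<tau> \<Longrightarrow> \<tau> \<le> T \<Longrightarrow> (W has_vector_derivative Wd \<tau>) (at \<tau> within {t0..T})"
proof -
  assume tt: "t0 \<le> \<tau>" "\<tau> \<le> T"
  have dh: "(h has_real_derivative m \<tau>) (at \<tau> within {t0..T})"
    using h_der[OF tt] by (simp add: has_real_derivative_iff_has_vector_derivative)
  have dk: "((\<lambda>t. (norm (x' t))\<^sup>2 / 2) has_real_derivative psi \<tau>) (at \<tau> within {t0..T})"
    using K1_der[OF tt] by (simp add: has_real_derivative_iff_has_vector_derivative)
  have xd: "(x has_vector_derivative x' \<tau>) (at \<tau> within {t0..T})"
    using xder_sub[of t0 \<tau>] tt by auto
  have dn: "((\<lambda>t. (norm (x t))\<^sup>2) has_real_derivative (2 * (x \<tau> \<bullet> x' \<tau>))) (at \<tau> within {t0..T})"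
    using vd_inner_self[OF xd] by (simp add: has_real_derivative_iff_has_vector_derivative)
  have de: "(eps has_real_derivative epsd \<tau>) (at \<tau> within {t0..T})" by (rule eps_der[OF tt])
  have dp: "((\<lambda>t. eps t * (norm (x t))\<^sup>2) has_real_derivative
      (epsd \<tau> * (norm (x \<tau>))\<^sup>2 + 2 * (x \<tau> \<bullet> x' \<tau>) * eps \<tau>)) (at \<tau> within {t0..T})"
    by (rule DERIV_mult[OF de dn])
  have "((\<lambda>t. h t + (norm (x' t))\<^sup>2 / 2 + eps t * (norm (x t))\<^sup>2 / 2) has_real_derivative
      (m \<tau> + psi \<tau> + (epsd \<tau> * (norm (x \<tau>))\<^sup>2 + 2 * (x \<tau> \<bullet> x' \<tau>) * eps \<tau>) / 2)) (at \<tau> within {t0..T})"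
    by (intro DERIV_add DERIV_cdivide dh dk dp)
  moreover have "m \<tau> + psi \<tau> + (epsd \<tau> * (norm (x \<tau>))\<^sup>2 + 2 * (x \<tau> \<bullet> x' \<tau>) * eps \<tau>) / 2 = Wd \<tau>"
    by (simp add: psi_def Wd_def algebra_simps)
  ultimately show ?thesis unfolding W_def[abs_def] by (simp add: has_real_derivative_iff_has_vector_derivative)
qed

end

context mtrigs begin

lemma eps_pos: "t > 0 \<Longrightarrow> eps t > 0" using \<beta> by (simp add: eps_def)

lemma epsd_neg: "t > 0 \<Longrightarrow> epsd t < 0" using \<beta> p by (simp add: epsd_def)

lemma a_pos: "t > 0 \<Longrightarrow> a t > 0" using \<alpha> by (simp add: a_def)

lemma Wd_nonpos: "t \<ge> t0 \<Longrightarrow> Wd t \<le> 0"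
proof -
  assume t: "t \<ge> t0"
  hence tp: "t > 0" using t0 by simp
  have "a t * (norm (x' t))\<^sup>2 \<ge> 0" using a_pos[OF tp] by simp
  moreover have "epsd t * (norm (x t))\<^sup>2 \<le> 0" using epsd_neg[OF tp] by (simp add: mult_nonpos_nonneg)
  ultimately show ?thesis by (simp add: Wd_def)
qed

lemma W_anti: "t0 \<le> s \<Longrightarrow> s \<le> t \<Longrightarrow> W t \<le> W s"
proof -
  assume st: "t0 \<le> s" "s \<le> t"
  have "(\<lambda>r. - W r) s \<le> (\<lambda>r. - W r) t"
  proof (rule mono_by_ftc[OF st order_refl])
    fix r assume r: "r \<in> {t0..t}"
    show "((\<lambda>r. - W r) has_vector_derivative - Wd r) (at r within {t0..t})"
      using W_der[of r t] r by (intro has_vector_derivative_minus) auto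
    show "- Wd r \<ge> 0" using Wd_nonpos[of r] r by auto
  qed
  thus ?thesis by simp
qed

lemma phi_der: "t0 \<le> \<tau> \<Longrightarrow> \<tau> \<le> T \<Longrightarrow> ((\<lambda>t. f i (x t)) has_vector_derivative (df i (x \<tau>) \<bullet> x' \<tau>)) (at \<tau> within {t0..T})"
proof -
  assume tt: "t0 \<le> \<tau>" "\<tau> \<le> T"
  have xd: "(x has_derivative (\<lambda>h. h *\<^sub>R x' \<tau>)) (at \<tau> within {t0..T})"
    using xder_sub[of t0 \<tau>] tt by (auto simp: has_vector_derivative_def)
  have "((\<lambda>t. f i (x t)) has_derivative (\<lambda>h. df i (x \<tau>) \<bullet> (h *\<^sub>R x' \<tau>))) (at \<tau> within {t0..T})"
    by (rule has_derivative_compose[OF xd grad])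
  thus ?thesis by (simp add: has_vector_derivative_def)
qed

lemma h_t0: "h t0 = 0" by (simp add: h_def)

lemma hphi_mono: "t0 \<le> s \<Longrightarrow> s \<le> t \<Longrightarrow> h s - f i (x s) \<le> h t - f i (x t)"
proof -
  assume st: "t0 \<le> s" "s \<le> t"
  show ?thesis
  proof (rule mono_by_ftc[OF st order_refl, of "\<lambda>r. h r - f i (x r)"])
    fix r assume r: "r \<in> {t0..t}"
    show "((\<lambda>r. h r - f i (x r)) has_vector_derivative m r - df i (x r) \<bullet> x' r) (at r within {t0..t})"
      using r by (intro has_vector_derivative_diff h_der phi_der) auto
    have "x' r \<bullet> df i (x r) \<le> m r" unfolding m_def by (rule Max_ge) auto
    thus "m r - df i (x r) \<bullet> x' r \<ge> 0" by (simp add: inner_commute)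
  qed
qed

lemma h_le_W: "t \<ge> t0 \<Longrightarrow> h t \<le> W t"
proof -
  assume t: "t \<ge> t0"
  have "eps t * (norm (x t))\<^sup>2 \<ge> 0" using eps_pos[of t] t t0 by simp
  thus ?thesis by (simp add: W_def)
qed

definition "Wbd = (norm v0)\<^sup>2 / 2 + eps t0 * (norm x0)\<^sup>2 / 2"

lemma W_t0: "W t0 = Wbd" by (simp add: W_def Wbd_def h_t0 init)

lemma phi_up: "t \<ge> t0 \<Longrightarrow> f i (x t) \<le> f i x0 + Wbd"
proof -
  assume t: "t \<ge> t0"
  have "h t0 - f i (x t0) \<le> h t - f i (x t)" by (rule hphi_mono) (use t in auto)
  moreover have "h t \<le> Wbd" using h_le_W[OF t] W_anti[of t0 t] t W_t0 by simp
  ultimately show ?thesis by (simp add: h_t0 init)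
qed

lemma lower_bound: "\<exists>Lb. \<forall>i t. t \<ge> t0 \<longrightarrow> f i (x t) \<ge> Lb i"
proof -
  define bvec where "bvec = Fvec f x0 + (\<chi> i. \<beta> / (2 * t0 powr p) * (norm x0)\<^sup>2 + 1/2 * (norm v0)\<^sup>2)"
  have bv: "bvec $ i = f i x0 + Wbd" for i
    by (simp add: bvec_def Fvec_def Wbd_def eps_def field_simps)
  obtain R where R: "\<forall>Fs \<in> Fvec f ` LPw f bvec. (INF z\<in>{z. Fvec f z = Fs}. norm z) \<le> R"
    using A3b unfolding bvec_def by blast
  have "f i (x t) \<ge> f i 0 - norm (df i 0) * (R + 1)" if t: "t \<ge> t0" for i t
  proof -
    have "x t \<in> levelset f bvec" using phi_up[OF t] bv by (simp add: levelset_def)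
    then obtain z' where z': "z' \<in> LPw f (Fvec f (x t))" using A3a unfolding bvec_def by blast
    have z'le: "f j z' \<le> f j (x t)" for j using z' by (simp add: LPw_def levelset_def Fvec_def)
    have "z' \<in> LPw f bvec"
      using z' z'le phi_up[OF t] bv by (auto simp: LPw_def levelset_def intro: order_trans)
    hence "(INF z\<in>{z. Fvec f z = Fvec f z'}. norm z) \<le> R" using R by blast
    hence "Inf (norm ` {z. Fvec f z = Fvec f z'}) < R + 1" by simp
    then obtain z'' where z'': "Fvec f z'' = Fvec f z'" "norm z'' < R + 1"
      using cInf_lessD[of "norm ` {z. Fvec f z = Fvec f z'}" "R+1"] by auto
    have "f i z'' = f i z'" using z''(1) by (simp add: Fvec_def vec_eq_iff)
    moreover have "f i z'' \<ge> f i 0 + df i 0 \<bullet> (z'' - 0)" by (rule conv_grad[OF conv grad])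
    moreover have "df i 0 \<bullet> z'' \<ge> - (norm (df i 0) * (R + 1))"
    proof -
      have "\<bar>df i 0 \<bullet> z''\<bar> \<le> norm (df i 0) * norm z''" by (rule Cauchy_Schwarz_ineq2)
      also have "\<dots> \<le> norm (df i 0) * (R + 1)" using z''(2) by (intro mult_left_mono) auto
      finally show ?thesis by linarith
    qed
    ultimately show ?thesis using z'le[of i] by simp
  qed
  thus ?thesis by (intro exI[of _ "\<lambda>i. f i 0 - norm (df i 0) * (R + 1)"]) auto
qed

end

context mtrigs begin

definition "Winf = Inf (W ` {t0..})"
definition "Pinf i = Inf ((\<lambda>t. f i (x t) - h t) ` {t0..})"

lemma W_bdd: "bdd_below (W ` {t0..})"
proof -
  obtain Lb where Lb: "\<And>i t. t \<ge> t0 \<Longrightarrow> f i (x t) \<ge> Lb i" using lower_bound by blast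
  fix i0 :: 'm
  have "W t \<ge> Lb i0 - f i0 x0" if t: "t \<ge> t0" for t
  proof -
    have "h t0 - f i0 (x t0) \<le> h t - f i0 (x t)" by (rule hphi_mono) (use t in auto)
    hence "h t \<ge> f i0 (x t) - f i0 x0" by (simp add: h_t0 init)
    thus ?thesis using h_le_W[OF t] Lb[OF t, of i0] by simp
  qed
  thus ?thesis by (intro bdd_belowI2[of _ "Lb i0 - f i0 x0"]) auto
qed

lemma P_bdd: "bdd_below ((\<lambda>t. f i (x t) - h t) ` {t0..})"
proof -
  obtain Lb where Lb: "\<And>i t. t \<ge> t0 \<Longrightarrow> f i (x t) \<ge> Lb i" using lower_bound by blast
  have "f i (x t) - h t \<ge> Lb i - Wbd" if t: "t \<ge> t0" for t
    using Lb[OF t, of i] h_le_W[OF t] W_anti[of t0 t] t W_t0 by simp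
  thus ?thesis by (intro bdd_belowI2[of _ "Lb i - Wbd"]) auto
qed

lemma Winf_le: "t \<ge> t0 \<Longrightarrow> Winf \<le> W t"
  unfolding Winf_def by (rule cInf_lower[OF _ W_bdd]) auto

lemma Pinf_le: "t \<ge> t0 \<Longrightarrow> Pinf i \<le> f i (x t) - h t"
  unfolding Pinf_def by (rule cInf_lower[OF _ P_bdd]) auto

lemma W_approx: "\<eta> > 0 \<Longrightarrow> \<exists>T\<ge>t0. \<forall>t\<ge>T. W t < Winf + \<eta>"
proof -
  assume e: "\<eta> > 0"
  have "Inf (W ` {t0..}) < Winf + \<eta>" using e by (simp add: Winf_def)
  then obtain y where "y \<in> W ` {t0..}" "y < Winf + \<eta>" using cInf_lessD[of "W ` {t0..}"] by auto
  then obtain T where T: "T \<ge> t0" "W T < Winf + \<eta>" by auto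
  have "W t < Winf + \<eta>" if "t \<ge> T" for t using W_anti[of T t] T that by simp
  thus ?thesis using T by blast
qed

lemma P_approx: "\<eta> > 0 \<Longrightarrow> \<exists>T\<ge>t0. \<forall>t\<ge>T. f i (x t) - h t < Pinf i + \<eta>"
proof -
  assume e: "\<eta> > 0"
  have "Inf ((\<lambda>t. f i (x t) - h t) ` {t0..}) < Pinf i + \<eta>" using e by (simp add: Pinf_def)
  then obtain y where "y \<in> (\<lambda>t. f i (x t) - h t) ` {t0..}" "y < Pinf i + \<eta>"
    using cInf_lessD[of "(\<lambda>t. f i (x t) - h t) ` {t0..}"] by auto
  then obtain T where T: "T \<ge> t0" "f i (x T) - h T < Pinf i + \<eta>" by auto
  have "f i (x t) - h t < Pinf i + \<eta>" if "t \<ge> T" for t using hphi_mono[of T t i] T that by simp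
  thus ?thesis using T by blast
qed

definition "wvec = (\<chi> i. Winf + Pinf i)"
definition "zs = (SOME z. z \<in> Sset f wvec)"

lemma zs_S: "zs \<in> Sset f wvec"
  unfolding zs_def using A4a[of wvec] by (simp add: some_in_eq)

lemma zs_le: "f i zs \<le> Winf + Pinf i"
proof -
  have "f i zs - (Winf + Pinf i) \<le> 2 * \<eta>" if e: "\<eta> > 0" for \<eta>
  proof -
    obtain TW where TW: "TW \<ge> t0" "\<And>t. t \<ge> TW \<Longrightarrow> W t < Winf + \<eta>" using W_approx[OF e] by blast
    have "\<forall>j. \<exists>T\<ge>t0. \<forall>t\<ge>T. f j (x t) - h t < Pinf j + \<eta>" using P_approx[OF e] by blast
    then obtain TP where TP: "\<And>j. TP j \<ge> t0" "\<And>j t. t \<ge> TP j \<Longrightarrow> f j (x t) - h t < Pinf j + \<eta>"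
      by metis
    define T where "T = max TW (MAX j. TP j)"
    have T1: "T \<ge> TW" by (simp add: T_def)
    have T2: "T \<ge> TP j" for j unfolding T_def by (rule max.coboundedI2) (rule Max_ge, auto)
    have Tt0: "T \<ge> t0" using T1 TW by simp
    have bnd: "f j (x T) - wvec $ j < 2 * \<eta>" for j
    proof -
      have "f j (x T) - h T < Pinf j + \<eta>" using TP(2)[OF T2[of j]] .
      moreover have "h T - Winf < \<eta>" using TW(2)[OF T1] h_le_W[OF Tt0] by simp
      ultimately show ?thesis by (simp add: wvec_def)
    qed
    have "(MAX j. f j zs - wvec $ j) \<le> (MAX j. f j (x T) - wvec $ j)"
      using zs_S by (simp add: Sset_def)
    also have "\<dots> < 2 * \<eta>" using bnd by (simp add: Max_less_iff)
    finally have "(MAX j. f j zs - wvec $ j) < 2 * \<eta>" .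
    moreover have "f i zs - wvec $ i \<le> (MAX j. f j zs - wvec $ j)" by (rule Max_ge) auto
    ultimately have "f i zs - wvec $ i < 2 * \<eta>" by linarith
    thus ?thesis by (simp add: wvec_def)
  qed
  hence "f i zs - (Winf + Pinf i) \<le> 0"
    by (metis (no_types) dense_le_bounded field_sum_of_halves half_gt_zero
        linorder_not_le mult_2 order_less_irrefl)
  thus ?thesis by simp
qed

lemma key_hM: "t \<ge> t0 \<Longrightarrow> h t - Winf \<le> Mz zs t"
proof -
  assume t: "t \<ge> t0"
  have "h t - Winf \<le> f i (x t) - f i zs" for i
    using zs_le[of i] Pinf_le[OF t, of i] by simp
  thus ?thesis unfolding Mz_def by (simp add: Min_ge_iff)
qed

end

context mtrigs begin

definition "kap t = (q+1) * t powr q"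
definition "kapd t = (q+1) * (q * t powr (q-1))"
definition "nu t = (q+1)/2 * (\<alpha> - q * t powr (q-1))"
definition "nud t = (q+1)/2 * (- (q * ((q-1) * t powr (q-1-1))))"
definition "Nz t = (norm (x t - zs))\<^sup>2"
definition "Jf t = (norm (x' t))\<^sup>2 + rho zs t"
definition "Jz t = integral {t0..t} Jf"
definition "Ef t = t powr (q+1) * (W t - Winf) + kap t * Yf zs t + nu t * Nz t"
definition "Phi t = (q+1) * t powr q * (W t - Winf) + t powr (q+1) * Wd t + kapd t * Yf zs t
   + kap t * Jf t + nud t * Nz t + nu t * (2 * Yf zs t)"

lemma Jf_cont: "continuous_on {t0..} Jf"
  unfolding Jf_def[abs_def] by (rule J_cont)

lemma rd: "(F has_vector_derivative F') (at \<tau> within S) \<longleftrightarrow> (F has_real_derivative F') (at \<tau> within S)"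
  by (simp add: has_real_derivative_iff_has_vector_derivative)

lemma powr_rder: "\<tau> > 0 \<Longrightarrow> ((\<lambda>s. s powr r) has_real_derivative (r * \<tau> powr (r - 1))) (at \<tau> within S)"
  using powr_der[of \<tau> r S] by (simp add: rd)

lemma Dz_cont: "t0 \<le> T1 \<Longrightarrow> continuous_on {T1..T} (Dz z)"
proof -
  assume T1: "t0 \<le> T1"
  have "continuous_on {t0..T} (\<lambda>t. integral {t0..t} (\<lambda>r. (norm (x' r))\<^sup>2 + rho z r))"
    by (rule indefinite_integral_continuous_1[OF int_sub[OF J_cont]]) simp
  hence c1: "continuous_on {T1..T} (\<lambda>t. integral {t0..t} (\<lambda>r. (norm (x' r))\<^sup>2 + rho z r))"
    by (rule continuous_on_subset) (use T1 in auto)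
  have c2: "continuous_on {T1..T} (Yf z)" by (rule cont_sub[OF Yf_cont T1])
  show ?thesis unfolding Dz_def[abs_def] by (intro continuous_intros c1 c2)
qed

lemma L1: "t0 \<le> T1 \<Longrightarrow> T1 \<le> T \<Longrightarrow> Ef T - Ef T1 \<le> integral {T1..T} Phi"
proof -
  assume T1: "t0 \<le> T1" and TT: "T1 \<le> T"
  define S where "S t = t powr (q+1) * (W t - Winf) + kap t * Jz t + nu t * Nz t" for t
  define Sd where "Sd t = ((q+1) * t powr (q+1-1)) * (W t - Winf) + t powr (q+1) * Wd t + kapd t * Jz t
      + kap t * Jf t + nud t * Nz t + nu t * (2 * Yf zs t)" for t
  have dS: "(S has_vector_derivative Sd \<tau>) (at \<tau> within {T1..T})" if tau: "\<tau> \<in> {T1..T}" for \<tau>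
  proof -
    have tp: "\<tau> > 0" using tau T1 t0 by simp
    have sub: "{T1..T} \<subseteq> {t0..T}" using T1 by auto
    have dW: "(W has_real_derivative Wd \<tau>) (at \<tau> within {T1..T})"
      using has_vector_derivative_within_subset[OF W_der[of \<tau> T] sub] tau T1 by (simp add: rd)
    have dJ: "(Jz has_real_derivative Jf \<tau>) (at \<tau> within {T1..T})"
    proof -
      have "(Jz has_vector_derivative Jf \<tau>) (at \<tau> within {t0..T})"
        unfolding Jz_def[abs_def] by (rule integral_has_vector_derivative[OF cont_sub[OF Jf_cont]]) (use tau T1 in auto)
      hence "(Jz has_vector_derivative Jf \<tau>) (at \<tau> within {T1..T})"
        by (rule has_vector_derivative_within_subset[OF _ sub])
      thus ?thesis by (simp add: rd)
    qed
    have xd: "((\<lambda>t. x t - zs) has_vector_derivative x' \<tau>) (at \<tau> within {T1..T})"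
      using xder_sub[of T1 \<tau> T] tau T1 t0
      by (intro has_vector_derivative_diff[where g'=0, simplified] derivative_intros)
         (auto intro: has_vector_derivative_within_subset[OF xder])
    have dN: "(Nz has_real_derivative 2 * Yf zs \<tau>) (at \<tau> within {T1..T})"
      using vd_inner_self[OF xd] unfolding Nz_def[abs_def] Yf_def by (simp add: rd)
    have dP1: "((\<lambda>s. s powr (q+1)) has_real_derivative ((q+1) * \<tau> powr (q+1-1))) (at \<tau> within {T1..T})"
      by (rule powr_rder[OF tp])
    have dk: "(kap has_real_derivative kapd \<tau>) (at \<tau> within {T1..T})"
      unfolding kap_def[abs_def] kapd_def by (rule DERIV_cmult[OF powr_rder[OF tp]])
    have dnu: "(nu has_real_derivative nud \<tau>) (at \<tau> within {T1..T})"
      unfolding nu_def[abs_def] nud_def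
      by (intro DERIV_cmult DERIV_diff[of "\<lambda>_. \<alpha>" 0, simplified] DERIV_const powr_rder[OF tp])
    have "(S has_real_derivative
       (((q+1) * \<tau> powr (q+1-1)) * (W \<tau> - Winf) + Wd \<tau> * \<tau> powr (q+1))
       + (kapd \<tau> * Jz \<tau> + Jf \<tau> * kap \<tau>) + (nud \<tau> * Nz \<tau> + 2 * Yf zs \<tau> * nu \<tau>)) (at \<tau> within {T1..T})"
      unfolding S_def[abs_def]
      by (intro DERIV_add DERIV_mult dP1 DERIV_diff[of W _ _ _ "\<lambda>_. Winf" 0, simplified] dW DERIV_const dk dJ dnu dN)
    thus ?thesis by (simp add: rd Sd_def algebra_simps)
  qed
  have ftc: "(Sd has_integral (S T - S T1)) {T1..T}"
    by (rule fundamental_theorem_of_calculus[OF TT dS])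
  have kd: "kap T * Dz zs T - kap T1 * Dz zs T1 \<le> integral {T1..T} (\<lambda>t. kapd t * Dz zs t)"
  proof (rule kappaD[OF TT])
    fix t assume t: "t \<in> {T1..T}"
    hence tp: "t > 0" using T1 t0 by simp
    show "(kap has_vector_derivative kapd t) (at t within {T1..T})"
      unfolding kap_def[abs_def] kapd_def rd by (rule DERIV_cmult[OF powr_rder[OF tp]])
    show "kap t \<ge> 0" using q by (simp add: kap_def)
  next
    show "continuous_on {T1..T} kapd" unfolding kapd_def[abs_def]
      by (intro continuous_on_mult continuous_on_const continuous_on_powr continuous_on_id) (use T1 t0 in auto)
    show "continuous_on {T1..T} (Dz zs)" by (rule Dz_cont[OF T1])
    fix s t assume "T1 \<le> s" "s \<le> t" "t \<le> T"
    thus "Dz zs t \<le> Dz zs s" using T1 by (intro D_mono) auto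
  qed
  have kdint: "(\<lambda>t. kapd t * Dz zs t) integrable_on {T1..T}"
    unfolding kapd_def[abs_def]
    by (intro integrable_continuous_interval continuous_on_mult continuous_on_const continuous_on_powr continuous_on_id Dz_cont[OF T1])
       (use T1 t0 in auto)
  have isum: "integral {T1..T} Sd + integral {T1..T} (\<lambda>t. kapd t * Dz zs t) = integral {T1..T} Phi"
  proof -
    have "integral {T1..T} Sd + integral {T1..T} (\<lambda>t. kapd t * Dz zs t)
        = integral {T1..T} (\<lambda>t. Sd t + kapd t * Dz zs t)"
      using ftc kdint by (intro integral_add[symmetric]) auto
    also have "\<dots> = integral {T1..T} Phi"
    proof (rule integral_cong)
      fix t assume "t \<in> {T1..T}"
      have "Yf zs t = Dz zs t + Jz t" by (simp add: Dz_def Jz_def Jf_def[abs_def])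
      thus "Sd t + kapd t * Dz zs t = Phi t" by (simp add: Sd_def Phi_def algebra_simps)
    qed
    finally show ?thesis .
  qed
  have Esplit: "Ef t = S t + kap t * Dz zs t" for t
  proof -
    have "Yf zs t = Dz zs t + Jz t" by (simp add: Dz_def Jz_def Jf_def[abs_def])
    thus ?thesis by (simp add: Ef_def S_def algebra_simps)
  qed
  show ?thesis using kd isum integral_unique[OF ftc] Esplit[of T] Esplit[of T1] by linarith
qed

end

context mtrigs begin

lemma Phi_bound:
  assumes t: "t \<ge> t0"
    and C1: "3 * (q+1) / 2 * t powr q \<le> \<alpha> / 2 * t"
    and C2: "(q+1) * q * (1-q) * t powr (q-1-1) \<le> p * \<beta> / 2 * t powr (q-p)"
  shows "Phi t \<le> - (\<alpha>/2) * t * (norm (x' t))\<^sup>2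
           + (norm zs)\<^sup>2 * ((q+1) * \<beta> / 2 * t powr (q-p) + (q+1) * q * (1-q) * t powr (q-1-1))"
proof -
  have tp: "t > 0" using t t0 by simp
  define P where "P = t powr q"
  define Q where "Q = t powr p"
  define R where "R = t powr (q-p)"
  define S2 where "S2 = t powr (q-1-1)"
  define U where "U = (norm (x' t))\<^sup>2"
  define X where "X = (norm (x t))\<^sup>2"
  define Z where "Z = (norm zs)\<^sup>2"
  define Y where "Y = Yf zs t"
  define N where "N = Nz t"
  define G where "G = x t \<bullet> (x t - zs)"
  define M where "M = Mz zs t"
  define \<Delta> where "\<Delta> = W t - Winf"
  have Pp: "P > 0" "Q > 0" "R > 0" "S2 > 0" using tp by (simp_all add: P_def Q_def R_def S2_def)
  have f1: "t powr (q+1) = P * t" using tp by (simp add: P_def powr_add)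
  have f2: "t powr (q-1) = P / t" using tp by (simp add: P_def powr_diff)
  have f3: "R = P / Q" using tp by (simp add: P_def Q_def R_def powr_diff)
  have f4: "t powr (p+1) = Q * t" using tp by (simp add: Q_def powr_add)
  have ea: "a t = \<alpha> / P" by (simp add: a_def P_def)
  have ee: "eps t = \<beta> / Q" by (simp add: eps_def Q_def)
  have eed: "epsd t = - (p * \<beta> / (Q * t))" by (simp add: epsd_def f4)
  have e1: "t powr (q+1) * Wd t = - \<alpha> * t * U - (p * \<beta> / 2) * R * X"
    unfolding Wd_def f1 ea eed f3 U_def[symmetric] X_def[symmetric] using Pp tp by (simp add: field_simps)
  have e2: "kap t * Jf t = (q+1) * P * U - (q+1) * \<alpha> * Y - (q+1) * \<beta> * R * G - (q+1) * P * M"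
    unfolding kap_def Jf_def rho_def P_def[symmetric] ea ee f3 U_def[symmetric] Y_def[symmetric] G_def[symmetric]
      M_def[symmetric] Yf_def[symmetric] using Pp by (simp add: field_simps)
  have e3: "kapd t * Y + nu t * (2 * Y) = (q+1) * \<alpha> * Y"
    unfolding kapd_def nu_def f2 using tp by (simp add: field_simps)
  have e4: "nud t = (q+1) * q * (1-q) / 2 * S2"
    unfolding nud_def S2_def by (simp add: field_simps)
  have eqA: "Phi t = (q+1) * P * (\<Delta> - M) - \<alpha> * t * U - (p * \<beta> / 2) * R * X + (q+1) * P * U
      - (q+1) * \<beta> * R * G + (q+1) * q * (1-q) / 2 * S2 * N"
  proof -
    have "Phi t = (q+1) * P * \<Delta> + t powr (q+1) * Wd t + (kapd t * Y + nu t * (2 * Y)) + kap t * Jf t + nud t * N"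
      unfolding Phi_def P_def \<Delta>_def Y_def N_def by (simp add: algebra_simps)
    also have "\<dots> = (q+1) * P * (\<Delta> - M) - \<alpha> * t * U - (p * \<beta> / 2) * R * X + (q+1) * P * U
      - (q+1) * \<beta> * R * G + (q+1) * q * (1-q) / 2 * S2 * N"
      unfolding e1 e2 e3 e4 by (simp add: algebra_simps)
    finally show ?thesis .
  qed
  have dM: "\<Delta> - M \<le> U/2 + (\<beta> / Q) * X / 2"
  proof -
    have "h t - Winf \<le> M" using key_hM[OF t] by (simp add: M_def)
    thus ?thesis by (simp add: \<Delta>_def W_def U_def X_def ee)
  qed
  have b1: "(q+1) * P * (\<Delta> - M) \<le> (q+1) * P * (U/2) + (q+1) * \<beta> * R * X / 2"
  proof -
    have "(q+1) * P * (\<Delta> - M) \<le> (q+1) * P * (U/2 + (\<beta> / Q) * X / 2)"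
      using dM Pp q by (intro mult_left_mono) auto
    also have "\<dots> = (q+1) * P * (U/2) + (q+1) * \<beta> * R * X / 2" unfolding f3 using Pp by (simp add: field_simps)
    finally show ?thesis .
  qed
  have G_ge: "G \<ge> X/2 - Z/2"
  proof -
    have "x t \<bullet> zs \<le> X/2 + Z/2"
    proof -
      have "0 \<le> (norm (x t - zs))\<^sup>2" by simp
      also have "\<dots> = X - 2 * (x t \<bullet> zs) + Z"
        by (simp add: X_def Z_def power2_norm_eq_inner inner_diff_left inner_diff_right inner_commute)
      finally show ?thesis by simp
    qed
    thus ?thesis by (simp add: G_def inner_diff_right X_def power2_norm_eq_inner)
  qed
  have b2: "(q+1) * \<beta> * R * G \<ge> (q+1) * \<beta> * R * (X/2 - Z/2)"
    using G_ge Pp q \<beta> by (intro mult_left_mono) auto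
  have N_le: "N \<le> 2 * X + 2 * Z"
  proof -
    have "N \<le> (norm (x t) + norm zs)\<^sup>2" unfolding N_def Nz_def
      by (intro power_mono norm_triangle_ineq4) auto
    also have "\<dots> \<le> 2 * X + 2 * Z"
      unfolding X_def Z_def by (smt (verit) power2_sum sum_squares_bound)
    finally show ?thesis .
  qed
  have ncnn: "(q+1) * q * (1-q) / 2 * S2 \<ge> 0" using q q1 Pp by simp
  have b3: "(q+1) * q * (1-q) / 2 * S2 * N \<le> (q+1) * q * (1-q) / 2 * S2 * (2 * X + 2 * Z)"
    using N_le ncnn by (intro mult_left_mono) auto
  have Unn: "U \<ge> 0" "X \<ge> 0" "Z \<ge> 0" by (simp_all add: U_def X_def Z_def)
  have b4: "3 * (q+1) / 2 * P * U \<le> \<alpha> / 2 * t * U"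
    using C1 Unn by (intro mult_right_mono) (auto simp: P_def)
  have b5: "(q+1) * q * (1-q) * S2 * X \<le> p * \<beta> / 2 * R * X"
    using C2 Unn by (intro mult_right_mono) (auto simp: S2_def R_def)
  have "Phi t \<le> - (\<alpha>/2) * t * U + Z * ((q+1) * \<beta> / 2 * R + (q+1) * q * (1-q) * S2)"
  proof -
    have "Phi t \<le> (q+1) * P * (U/2) + (q+1) * \<beta> * R * X / 2 - \<alpha> * t * U - (p * \<beta> / 2) * R * X + (q+1) * P * U
      - (q+1) * \<beta> * R * (X/2 - Z/2) + (q+1) * q * (1-q) / 2 * S2 * (2 * X + 2 * Z)"
      using eqA b1 b2 b3 by linarith
    also have "\<dots> = 3 * (q+1) / 2 * P * U - \<alpha> * t * U - (p * \<beta> / 2) * R * X + (q+1) * q * (1-q) * S2 * X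
       + Z * ((q+1) * \<beta> / 2 * R + (q+1) * q * (1-q) * S2)"
      by (simp add: field_simps)
    also have "\<dots> \<le> - (\<alpha>/2) * t * U + Z * ((q+1) * \<beta> / 2 * R + (q+1) * q * (1-q) * S2)"
      using b4 b5 by linarith
    finally show ?thesis .
  qed
  thus ?thesis by (simp add: U_def Z_def R_def S2_def)
qed

end

lemma powr_big:
  fixes e A :: real
  assumes e: "e > 0"
  shows "\<exists>T>0. \<forall>t\<ge>T. t powr e \<ge> A"
proof -
  define T where "T = max 1 ((\<bar>A\<bar> + 1) powr (1/e))"
  have T1: "T \<ge> 1" by (simp add: T_def)
  have "t powr e \<ge> A" if t: "t \<ge> T" for t
  proof -
    have "t powr e \<ge> ((\<bar>A\<bar> + 1) powr (1/e)) powr e"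
      using t e by (intro powr_mono2) (auto simp: T_def)
    also have "((\<bar>A\<bar> + 1) powr (1/e)) powr e = \<bar>A\<bar> + 1" using e by (simp add: powr_powr)
    finally show ?thesis by linarith
  qed
  thus ?thesis using T1 by (intro exI[of _ T]) auto
qed

lemma int_powr_bound:
  fixes e a b :: real
  assumes e: "e < -1" and ab: "0 < a" "a \<le> b"
  shows "(\<lambda>t. t powr e) integrable_on {a..b}" "integral {a..b} (\<lambda>t. t powr e) \<le> a powr (e+1) / (-(e+1))"
proof -
  have d: "((\<lambda>t. t powr (e+1) / (e+1)) has_vector_derivative t powr e) (at t within {a..b})"
    if "t \<in> {a..b}" for t
  proof -
    have tp: "t > 0" using that ab by simp
    have "((\<lambda>t. t powr (e+1) / (e+1)) has_real_derivative ((e+1) * t powr (e+1-1)) / (e+1)) (at t within {a..b})"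
      by (rule DERIV_cdivide[OF has_field_derivative_at_within[OF has_real_derivative_powr[OF tp]]])
    moreover have "((e+1) * t powr (e+1-1)) / (e+1) = t powr e" using e by simp
    ultimately show ?thesis by (simp add: has_real_derivative_iff_has_vector_derivative)
  qed
  have hi: "((\<lambda>t. t powr e) has_integral (b powr (e+1) / (e+1) - a powr (e+1) / (e+1))) {a..b}"
    by (rule fundamental_theorem_of_calculus[OF ab(2) d])
  thus "(\<lambda>t. t powr e) integrable_on {a..b}" by blast
  have "b powr (e+1) / (e+1) \<le> 0" using e ab by (simp add: divide_nonneg_neg)
  hence "integral {a..b} (\<lambda>t. t powr e) \<le> - (a powr (e+1) / (e+1))" using integral_unique[OF hi] by simp
  moreover have "- (a powr (e+1) / (e+1)) = a powr (e+1) / (-(e+1))" by (simp add: minus_divide_right)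
  ultimately show "integral {a..b} (\<lambda>t. t powr e) \<le> a powr (e+1) / (-(e+1))" by simp
qed

context mtrigs begin

lemma Ef_lower:
  assumes t: "t \<ge> t0" and C3: "q * t powr (q-1) \<le> \<alpha> / 2"
  shows "Ef t \<ge> - ((q+1)/\<alpha>) * t powr (2*q) * (norm (x' t))\<^sup>2"
proof -
  have tp: "t > 0" using t t0 by simp
  define n where "n = norm (x t - zs)"
  define u where "u = norm (x' t)"
  define k where "k = kap t"
  define v where "v = nu t"
  have k0: "k \<ge> 0" using q by (simp add: k_def kap_def)
  have v4: "v \<ge> (q+1) * \<alpha> / 4"
  proof -
    have "(q+1)/2 * (\<alpha> / 2) \<le> (q+1)/2 * (\<alpha> - q * t powr (q-1))" using C3 q by (intro mult_left_mono) auto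
    thus ?thesis by (simp add: v_def nu_def)
  qed
  have vp: "v > 0" using v4 \<alpha> q by (smt (verit) divide_pos_pos mult_pos_pos)
  have W0: "t powr (q+1) * (W t - Winf) \<ge> 0" using Winf_le[OF t] by simp
  have Yb: "k * Yf zs t \<ge> - (k * (n * u))"
  proof -
    have "\<bar>Yf zs t\<bar> \<le> n * u" unfolding Yf_def n_def u_def by (rule Cauchy_Schwarz_ineq2)
    hence "Yf zs t \<ge> - (n * u)" by linarith
    thus ?thesis using k0 by (metis minus_mult_right mult_left_mono)
  qed
  have sq: "v * n\<^sup>2 - k * (n * u) \<ge> - (k\<^sup>2 * u\<^sup>2 / (4 * v))"
  proof -
    have "0 \<le> (2 * v * n - k * u)\<^sup>2" by simp
    also have "\<dots> = 4 * v * (v * n\<^sup>2 - k * (n * u)) + k\<^sup>2 * u\<^sup>2" by (simp add: power2_eq_square algebra_simps)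
    finally have "- (k\<^sup>2 * u\<^sup>2) \<le> 4 * v * (v * n\<^sup>2 - k * (n * u))" by simp
    thus ?thesis using vp by (simp add: field_simps)
  qed
  have kk: "k\<^sup>2 * u\<^sup>2 / (4 * v) \<le> ((q+1)/\<alpha>) * t powr (2*q) * u\<^sup>2"
  proof -
    have "k\<^sup>2 = (q+1)\<^sup>2 * t powr (2*q)" unfolding k_def kap_def
      using tp by (simp add: power_mult_distrib powr_add[symmetric] power2_eq_square)
    hence "k\<^sup>2 * u\<^sup>2 / (4 * v) = (q+1)\<^sup>2 * t powr (2*q) * u\<^sup>2 / (4 * v)" by simp
    also have "\<dots> \<le> (q+1)\<^sup>2 * t powr (2*q) * u\<^sup>2 / (4 * ((q+1) * \<alpha> / 4))"
      using v4 vp \<alpha> q by (intro divide_left_mono mult_pos_pos) auto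
    also have "\<dots> = ((q+1)/\<alpha>) * t powr (2*q) * u\<^sup>2"
    proof -
      have gen: "c\<^sup>2 * X / (4 * (c * \<alpha> / 4)) = c / \<alpha> * X" if "c > 0" for c X :: real
        using that \<alpha> by (simp add: power2_eq_square)
      show ?thesis using gen[of "q+1" "t powr (2*q) * u\<^sup>2"] q by (simp add: mult.assoc)
    qed
    finally show ?thesis .
  qed
  have "Ef t = t powr (q+1) * (W t - Winf) + k * Yf zs t + v * n\<^sup>2"
    by (simp add: Ef_def k_def v_def n_def Nz_def)
  thus ?thesis using W0 Yb sq kk unfolding u_def by linarith
qed

lemma T1_ex: "\<exists>T1\<ge>t0. \<forall>t\<ge>T1.
     3 * (q+1) / 2 * t powr q \<le> \<alpha> / 2 * t
   \<and> (q+1) * q * (1-q) * t powr (q-1-1) \<le> p * \<beta> / 2 * t powr (q-p)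
   \<and> q * t powr (q-1) \<le> \<alpha> / 2"
proof -
  obtain A1 where A1: "A1 > 0" "\<And>t. t \<ge> A1 \<Longrightarrow> t powr (1-q) \<ge> max (3 * (q+1) / \<alpha>) (2 * q / \<alpha>)"
    using powr_big[of "1-q" "max (3 * (q+1) / \<alpha>) (2 * q / \<alpha>)"] q1 by auto
  obtain A2 where A2: "A2 > 0" "\<And>t. t \<ge> A2 \<Longrightarrow> t powr (2-p) \<ge> 2 * (q+1) * q * (1-q) / (p * \<beta>)"
    using powr_big[of "2-p" "2 * (q+1) * q * (1-q) / (p * \<beta>)"] p by auto
  define T1 where "T1 = max t0 (max A1 A2)"
  have "3 * (q+1) / 2 * t powr q \<le> \<alpha> / 2 * t
   \<and> (q+1) * q * (1-q) * t powr (q-1-1) \<le> p * \<beta> / 2 * t powr (q-p)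
   \<and> q * t powr (q-1) \<le> \<alpha> / 2" if t: "t \<ge> T1" for t
  proof (intro conjI)
    have tp: "t > 0" using t t0 by (simp add: T1_def)
    have h1: "t powr (1-q) \<ge> 3 * (q+1) / \<alpha>" "t powr (1-q) \<ge> 2 * q / \<alpha>" using A1(2)[of t] t by (auto simp: T1_def)
    have h2: "t powr (2-p) \<ge> 2 * (q+1) * q * (1-q) / (p * \<beta>)" using A2(2)[of t] t by (simp add: T1_def)
    have pq: "t powr q * t powr (1-q) = t" using tp by (simp add: powr_add[symmetric])
    have "3 * (q+1) / 2 * t powr q \<le> \<alpha> / 2 * (t powr q * t powr (1-q))"
    proof -
      have "3 * (q+1) \<le> \<alpha> * t powr (1-q)" using h1(1) \<alpha> by (simp add: field_simps)
      hence "t powr q * (3 * (q+1)) \<le> t powr q * (\<alpha> * t powr (1-q))" by (intro mult_left_mono) auto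
      thus ?thesis by (simp add: field_simps)
    qed
    thus "3 * (q+1) / 2 * t powr q \<le> \<alpha> / 2 * t" using pq by simp
    have pq2: "t powr (q-1) * t powr (1-q) = 1" using tp by (simp add: powr_add[symmetric])
    have "2 * q \<le> \<alpha> * t powr (1-q)" using h1(2) \<alpha> by (simp add: field_simps)
    hence "t powr (q-1) * (2 * q) \<le> t powr (q-1) * (\<alpha> * t powr (1-q))" by (intro mult_left_mono) auto
    thus "q * t powr (q-1) \<le> \<alpha> / 2" using pq2 by (simp add: field_simps)
    have pq3: "t powr (q-1-1) * t powr (2-p) = t powr (q-p)" using tp by (simp add: powr_add[symmetric])
    have "2 * (q+1) * q * (1-q) \<le> p * \<beta> * t powr (2-p)" using h2 p \<beta> by (simp add: field_simps)
    hence "t powr (q-1-1) * (2 * (q+1) * q * (1-q)) \<le> t powr (q-1-1) * (p * \<beta> * t powr (2-p))"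
      by (intro mult_left_mono) auto
    thus "(q+1) * q * (1-q) * t powr (q-1-1) \<le> p * \<beta> / 2 * t powr (q-p)"
      using pq3 by (simp add: field_simps)
  qed
  thus ?thesis by (intro exI[of _ T1]) (auto simp: T1_def)
qed

end

context mtrigs begin

lemma W_cont: "continuous_on {t0..T} W"
  unfolding continuous_on_eq_continuous_within
  using W_der has_vector_derivative_continuous by fastforce

lemma Phi_cont: "t0 \<le> T1 \<Longrightarrow> continuous_on {T1..T} Phi"
proof -
  assume T1: "t0 \<le> T1"
  have pos: "\<forall>s\<in>{T1..T}. s \<noteq> 0" using T1 t0 by auto
  have cW: "continuous_on {T1..T} W" by (rule continuous_on_subset[OF W_cont[of T]]) (use T1 in auto)
  have cx: "continuous_on {T1..T} x" by (rule cont_sub[OF x_cont T1])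
  have cx': "continuous_on {T1..T} x'" by (rule cont_sub[OF x'cont T1])
  have ca: "continuous_on {T1..T} a" by (rule cont_sub[OF a_cont T1])
  have cY: "continuous_on {T1..T} (Yf zs)" by (rule cont_sub[OF Yf_cont T1])
  have cJ: "continuous_on {T1..T} Jf" by (rule cont_sub[OF Jf_cont T1])
  have cP: "continuous_on {T1..T} (\<lambda>s. s powr e)" for e
    using pos by (intro continuous_on_powr continuous_on_id continuous_on_const) auto
  have cepsd: "continuous_on {T1..T} epsd" unfolding epsd_def[abs_def]
    using pos cP by (intro continuous_on_minus continuous_on_divide continuous_on_const) auto
  have cWd: "continuous_on {T1..T} Wd" unfolding Wd_def[abs_def]
    by (intro continuous_intros ca cx cx' cepsd) auto
  have cN: "continuous_on {T1..T} Nz" unfolding Nz_def[abs_def] by (intro continuous_intros cx)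
  have cP': "continuous_on {T1..T} (\<lambda>s. c * s powr e)" for c e by (intro continuous_on_mult continuous_on_const cP)
  show ?thesis unfolding Phi_def[abs_def] kap_def[abs_def] kapd_def[abs_def] nu_def[abs_def] nud_def[abs_def]
    by (intro continuous_on_add continuous_on_mult continuous_on_diff continuous_on_const continuous_on_minus cW cWd cY cJ cN cP cP')
qed

lemma main_bound: "\<exists>T1\<ge>t0. \<exists>B. \<forall>T\<ge>T1. integral {T1..T} (\<lambda>s. s * (norm (x' s))\<^sup>2) \<le> B"
proof -
  obtain T1 where T1: "T1 \<ge> t0" and C: "\<And>t. t \<ge> T1 \<Longrightarrow>
     3 * (q+1) / 2 * t powr q \<le> \<alpha> / 2 * t
   \<and> (q+1) * q * (1-q) * t powr (q-1-1) \<le> p * \<beta> / 2 * t powr (q-p)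
   \<and> q * t powr (q-1) \<le> \<alpha> / 2" using T1_ex by blast
  have T1p: "T1 > 0" using T1 t0 by simp
  define \<phi> where "\<phi> s = s * (norm (x' s))\<^sup>2" for s
  define Zr where "Zr s = (norm zs)\<^sup>2 * ((q+1) * \<beta> / 2 * s powr (q-p) + (q+1) * q * (1-q) * s powr (q-1-1))" for s
  define Cr where "Cr = (norm zs)\<^sup>2 * ((q+1) * \<beta> / 2 * (T1 powr (q-p+1) / (-(q-p+1)))
      + (q+1) * q * (1-q) * (T1 powr (q-1-1+1) / (-(q-1-1+1))))"
  have \<phi>c: "continuous_on {T1..} \<phi>" unfolding \<phi>_def[abs_def]
    by (intro continuous_intros continuous_on_subset[OF x'cont]) (use T1 in auto)
  have \<phi>int: "\<phi> integrable_on {T1..T}" for T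
    by (rule integrable_continuous_interval) (rule continuous_on_subset[OF \<phi>c], auto)
  have e1: "q - p < -1" using qp by simp
  have e2: "q - 1 - 1 < -1" using q1 by simp
  have ineq: "\<alpha>/2 * integral {T1..T} \<phi> \<le> (Ef T1 + Cr) + ((q+1)/\<alpha>) * T powr (2*q-1) * \<phi> T"
    if T: "T \<ge> T1" for T
  proof -
    have Tp: "T > 0" using T T1p by simp
    have pint1: "(\<lambda>s. s powr (q-p)) integrable_on {T1..T}" by (rule int_powr_bound(1)[OF e1 T1p T])
    have pint2: "(\<lambda>s. s powr (q-1-1)) integrable_on {T1..T}" by (rule int_powr_bound(1)[OF e2 T1p T])
    have Zint: "Zr integrable_on {T1..T}" unfolding Zr_def[abs_def]
      using pint1 pint2 by (intro integrable_on_mult_right integrable_add) auto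
    have rint: "(\<lambda>s. - (\<alpha>/2) * \<phi> s + Zr s) integrable_on {T1..T}"
      using \<phi>int Zint by (intro integrable_add integrable_on_mult_right) auto
    have "Ef T - Ef T1 \<le> integral {T1..T} Phi" by (rule L1[OF T1 T])
    also have "\<dots> \<le> integral {T1..T} (\<lambda>s. - (\<alpha>/2) * \<phi> s + Zr s)"
    proof (rule integral_le)
      show "Phi integrable_on {T1..T}" by (rule integrable_continuous_interval[OF Phi_cont[OF T1]])
      show "(\<lambda>s. - (\<alpha>/2) * \<phi> s + Zr s) integrable_on {T1..T}" by (rule rint)
      fix s assume s: "s \<in> {T1..T}"
      hence st0: "s \<ge> t0" using T1 by simp
      have Cs: "3 * (q+1) / 2 * s powr q \<le> \<alpha> / 2 * s"
        "(q+1) * q * (1-q) * s powr (q-1-1) \<le> p * \<beta> / 2 * s powr (q-p)" using C[of s] s by auto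
      show "Phi s \<le> - (\<alpha>/2) * \<phi> s + Zr s"
        using Phi_bound[OF st0 Cs] by (simp add: \<phi>_def Zr_def mult.assoc)
    qed
    also have "\<dots> = integral {T1..T} (\<lambda>s. - (\<alpha>/2) * \<phi> s) + integral {T1..T} Zr"
      by (rule integral_add[OF integrable_on_mult_right[OF \<phi>int] Zint])
    also have "integral {T1..T} (\<lambda>s. - (\<alpha>/2) * \<phi> s) = - (\<alpha>/2) * integral {T1..T} \<phi>"
      by (rule integral_mult_right)
    also have "integral {T1..T} Zr \<le> Cr"
    proof -
      have "integral {T1..T} Zr = (norm zs)\<^sup>2 * ((q+1) * \<beta> / 2 * integral {T1..T} (\<lambda>s. s powr (q-p))
          + (q+1) * q * (1-q) * integral {T1..T} (\<lambda>s. s powr (q-1-1)))"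
        unfolding Zr_def[abs_def] using pint1 pint2
        by (simp add: integral_add integrable_on_mult_right)
      also have "\<dots> \<le> Cr"
      proof -
        have b1: "(q+1) * \<beta> / 2 * integral {T1..T} (\<lambda>s. s powr (q-p)) \<le> (q+1) * \<beta> / 2 * (T1 powr (q-p+1) / (-(q-p+1)))"
          using int_powr_bound(2)[OF e1 T1p T] q \<beta> by (intro mult_left_mono) auto
        have b2: "(q+1) * q * (1-q) * integral {T1..T} (\<lambda>s. s powr (q-1-1)) \<le> (q+1) * q * (1-q) * (T1 powr (q-1-1+1) / (-(q-1-1+1)))"
          using int_powr_bound(2)[OF e2 T1p T] q q1 by (intro mult_left_mono) auto
        show ?thesis unfolding Cr_def by (rule mult_left_mono[OF add_mono[OF b1 b2]]) simp
      qed
      finally show ?thesis .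
    qed
    finally have up: "Ef T - Ef T1 \<le> - (\<alpha>/2) * integral {T1..T} \<phi> + Cr" by simp
    have lo: "Ef T \<ge> - ((q+1)/\<alpha>) * T powr (2*q) * (norm (x' T))\<^sup>2"
      using Ef_lower[of T] C[OF T] T T1 by simp
    have "T powr (2*q) * (norm (x' T))\<^sup>2 = T powr (2*q-1) * \<phi> T"
      using Tp by (simp add: \<phi>_def powr_diff field_simps)
    hence lo': "Ef T \<ge> - ((q+1)/\<alpha> * T powr (2*q-1) * \<phi> T)" using lo by (simp add: mult.assoc)
    show ?thesis using up lo' by linarith
  qed
  have poly: "integral {T1..T} \<phi> \<le> ((W T1 - Winf)/\<alpha>) * T powr (1+q)" if T: "T \<ge> T1" for T
  proof -
    have Tp: "T > 0" using T T1p by simp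
    define g where "g s = a s * (norm (x' s))\<^sup>2" for s
    have gc: "continuous_on {T1..T} g" unfolding g_def[abs_def]
      by (intro continuous_intros cont_sub[OF a_cont] cont_sub[OF x'cont] T1)
    have gint: "g integrable_on {T1..T}" by (rule integrable_continuous_interval[OF gc])
    have Wint: "(Wd has_integral (W T - W T1)) {T1..T}"
    proof (rule fundamental_theorem_of_calculus[OF T])
      fix s assume s: "s \<in> {T1..T}"
      show "(W has_vector_derivative Wd s) (at s within {T1..T})"
        using has_vector_derivative_within_subset[OF W_der[of s T]] s T1 by auto
    qed
    have "integral {T1..T} g \<le> integral {T1..T} (\<lambda>s. - Wd s)"
    proof (rule integral_le[OF gint])
      show "(\<lambda>s. - Wd s) integrable_on {T1..T}" using Wint by (intro integrable_neg) blast
      fix s assume s: "s \<in> {T1..T}"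
      hence sp: "s > 0" using T1p by simp
      have "epsd s * (norm (x s))\<^sup>2 \<le> 0" using epsd_neg[OF sp] by (simp add: mult_nonpos_nonneg)
      thus "g s \<le> - Wd s" by (simp add: g_def Wd_def)
    qed
    also have "\<dots> = W T1 - W T" using integral_unique[OF Wint] by (simp add: integral_neg)
    also have "\<dots> \<le> W T1 - Winf" using Winf_le[of T] T T1 by simp
    finally have gb: "integral {T1..T} g \<le> W T1 - Winf" .
    have "integral {T1..T} \<phi> \<le> integral {T1..T} (\<lambda>s. T powr (1+q) / \<alpha> * g s)"
    proof (rule integral_le[OF \<phi>int])
      show "(\<lambda>s. T powr (1+q) / \<alpha> * g s) integrable_on {T1..T}" using gint by (rule integrable_on_mult_right)
      fix s assume s: "s \<in> {T1..T}"
      hence sp: "s > 0" using T1p by simp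
      have "s * (norm (x' s))\<^sup>2 = s powr (1+q) / \<alpha> * g s"
        using sp \<alpha> by (simp add: g_def a_def powr_add field_simps)
      also have "\<dots> \<le> T powr (1+q) / \<alpha> * g s"
      proof (rule mult_right_mono)
        show "s powr (1+q) / \<alpha> \<le> T powr (1+q) / \<alpha>"
          using s sp q \<alpha> by (intro divide_right_mono powr_mono2) auto
        show "g s \<ge> 0" using a_pos[OF sp] by (simp add: g_def)
      qed
      finally show "\<phi> s \<le> T powr (1+q) / \<alpha> * g s" by (simp add: \<phi>_def)
    qed
    also have "\<dots> = T powr (1+q) / \<alpha> * integral {T1..T} g" by simp
    also have "\<dots> \<le> T powr (1+q) / \<alpha> * (W T1 - Winf)" using gb \<alpha> by (intro mult_left_mono) auto
    finally show ?thesis by (simp add: field_simps)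
  qed
  have Kp: "(q+1)/\<alpha> > 0" using q \<alpha> by simp
  have "\<exists>B. \<forall>T\<ge>T1. integral {T1..T} \<phi> \<le> B"
    by (rule gronwall_bound[OF T1p q(1) q1 \<alpha> Kp \<phi>c _ ineq poly])
       (use T1p in \<open>auto simp: \<phi>_def\<close>)
  thus ?thesis using T1 unfolding \<phi>_def by blast
qed

end

context mtrigs begin

lemma result:
  assumes r: "q \<le> r" "r \<le> (q + 1) / 2"
  shows "(\<lambda>s. s powr (2 * r - q) * (norm (x' s))\<^sup>2) integrable_on {t0..}"
proof -
  obtain T1 B where T1: "T1 \<ge> t0" and B: "\<And>T. T \<ge> T1 \<Longrightarrow> integral {T1..T} (\<lambda>s. s * (norm (x' s))\<^sup>2) \<le> B"
    using main_bound by blast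
  define g where "g s = s powr (2 * r - q) * (norm (x' s))\<^sup>2" for s
  define \<phi> where "\<phi> s = s * (norm (x' s))\<^sup>2" for s
  define k where "k = t0 powr (2 * r - q - 1)"
  have kp: "k \<ge> 0" by (simp add: k_def)
  have gc: "continuous_on {t0..T} g" for T unfolding g_def[abs_def]
    by (intro continuous_intros continuous_on_subset[OF x'cont]) (use t0 in auto)
  have gint: "g integrable_on {a..b}" if "t0 \<le> a" for a b
    by (rule integrable_continuous_interval, rule continuous_on_subset[OF gc[of b]]) (use that in auto)
  have \<phi>int: "\<phi> integrable_on {a..b}" if "t0 \<le> a" for a b unfolding \<phi>_def[abs_def]
    by (rule integrable_continuous_interval, intro continuous_intros continuous_on_subset[OF x'cont]) (use that in auto)
  have gnn: "g s \<ge> 0" for s by (simp add: g_def)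
  have gle: "g s \<le> k * \<phi> s" if s: "s \<ge> t0" for s
  proof -
    have sp: "s > 0" using s t0 by simp
    have "s powr (2 * r - q) = s powr (2 * r - q - 1) * s" using sp by (simp add: powr_diff)
    moreover have "s powr (2 * r - q - 1) \<le> k" unfolding k_def
      using r s t0 by (intro powr_mono2') auto
    ultimately have "s powr (2 * r - q) \<le> k * s" using sp by (simp add: mult_right_mono)
    hence "s powr (2 * r - q) * (norm (x' s))\<^sup>2 \<le> (k * s) * (norm (x' s))\<^sup>2" by (rule mult_right_mono) simp
    thus ?thesis unfolding g_def \<phi>_def by (simp add: mult.assoc)
  qed
  have BT1: "integral {t0..T1} g \<ge> 0" using gint[of t0 T1] gnn
    by (intro Henstock_Kurzweil_Integration.integral_nonneg) auto
  show ?thesis unfolding g_def[symmetric]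
  proof (rule integrable_to_inf_bounded[of t0 g "integral {t0..T1} g + k * B"])
    fix y assume y: "y \<ge> t0"
    show "g integrable_on {t0..y}" by (rule gint) simp
    show "g y \<ge> 0" by (rule gnn)
    show "integral {t0..y} g \<le> integral {t0..T1} g + k * B"
    proof (cases "y \<le> T1")
      case True
      have "integral {t0..T1} g - integral {t0..y} g = integral {y..T1} g"
        by (rule integral_diff_sub[OF gint[of t0 T1]]) (use y True in auto)
      moreover have "integral {y..T1} g \<ge> 0" using gint[of y T1] gnn y
        by (intro Henstock_Kurzweil_Integration.integral_nonneg) auto
      moreover have "k * B \<ge> 0"
      proof -
        have "integral {T1..T1} \<phi> \<le> B" using B[of T1] by (simp add: \<phi>_def[abs_def])
        hence "B \<ge> 0" by simp
        thus ?thesis using kp by simp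
      qed
      ultimately show ?thesis by linarith
    next
      case False
      have "integral {t0..y} g - integral {t0..T1} g = integral {T1..y} g"
        by (rule integral_diff_sub[OF gint[of t0 y]]) (use y False T1 in auto)
      moreover have "integral {T1..y} g \<le> integral {T1..y} (\<lambda>s. k * \<phi> s)"
        using gint[of T1 y] \<phi>int[of T1 y] gle T1 by (intro integral_le integrable_on_mult_right) auto
      moreover have "integral {T1..y} (\<lambda>s. k * \<phi> s) = k * integral {T1..y} \<phi>" by simp
      moreover have "k * integral {T1..y} \<phi> \<le> k * B"
        using B[of y] False kp by (intro mult_left_mono) (auto simp: \<phi>_def[abs_def])
      ultimately show ?thesis by linarith
    qed
  qed
qed

end

theorem mainTheorem16:
  fixes f :: "'m::finite \<Rightarrow> 'a::{real_inner,complete_space} \<Rightarrow> real"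
    and df :: "'m \<Rightarrow> 'a \<Rightarrow> 'a"
    and t0 \<alpha> \<beta> q p :: real
    and x0 v0 :: 'a
    and x x' x'' :: "real \<Rightarrow> 'a"
  assumes grad: "\<And>i z. (f i has_derivative (\<lambda>h. df i z \<bullet> h)) (at z)"
    and conv: "\<And>i. convex_on UNIV (f i)"
    and lip: "\<And>i. \<exists>L. L-lipschitz_on UNIV (df i)"
    and t0: "t0 > 0" and \<alpha>: "\<alpha> > 0" and \<beta>: "\<beta> > 0"
    and q: "0 < q" "q \<le> 1" and p: "0 < p" "p < 2" and qp: "q + 1 < p"
    \<comment> \<open>(A3)\<close>
    and A3a: "\<And>z. z \<in> levelset f (Fvec f x0 + (\<chi> i. \<beta> / (2 * t0 powr p) * (norm x0)\<^sup>2
                                                   + 1/2 * (norm v0)\<^sup>2))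
               \<Longrightarrow> LPw f (Fvec f z) \<noteq> {}"
    and A3b: "\<exists>R. \<forall>Fs \<in> Fvec f ` LPw f (Fvec f x0 + (\<chi> i. \<beta> / (2 * t0 powr p) * (norm x0)\<^sup>2
                                                   + 1/2 * (norm v0)\<^sup>2)).
                 (INF z\<in>{z. Fvec f z = Fs}. norm z) \<le> R"
    \<comment> \<open>(A4)\<close>
    and A4a: "\<And>w. Sset f w \<noteq> {}"
    and A4b: "continuous_on UNIV (\<lambda>w. hproj (Sset f w) 0)"
    \<comment> \<open>x is a trajectory solution of (MTRIGS)\<close>
    and xder: "\<And>t. t \<ge> t0 \<Longrightarrow> (x has_vector_derivative x' t) (at t within {t0..})"
    and x'cont: "continuous_on {t0..} x'"
    and x''int: "\<And>T. T \<ge> t0 \<Longrightarrow> x'' integrable_on {t0..T}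
                      \<and> (\<lambda>s. norm (x'' s)) integrable_on {t0..T}"
    and x'rep: "\<And>t. t \<ge> t0 \<Longrightarrow> (x'' has_integral (x' t - x' t0)) {t0..t}"
    and eq: "AE t in lebesgue. t \<ge> t0 \<longrightarrow>
               (\<alpha> / t powr q) *\<^sub>R x' t
                 + hproj ((\<lambda>g. g + (\<beta> / t powr p) *\<^sub>R x t + x'' t) ` Cset df (x t)) 0 = 0"
    and init: "x t0 = x0" "x' t0 = v0"
    and r: "q \<le> r" "r \<le> (q + 1) / 2"
  shows "(\<lambda>s. s powr (2 * r - q) * (norm (x' s))\<^sup>2) integrable_on {t0..}"
proof -
  interpret M: mtrigs f df t0 \<alpha> \<beta> q p x0 v0 x x' x''
    by (rule mtrigs.intro) (fact grad conv lip t0 \<alpha> \<beta> q p qp A3a A3b A4a xder x'cont x''int x'rep eq init)+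
  show ?thesis by (rule M.result[OF r])
qed

end
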